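(* Let the data $\eta,Q_g,\Psi,c_{max},\theta_s$ be as in the context, and let the pyrolysis heat $Q_p$ satisfy $-Q_g<Q_p<0$. Then there exists exactly one $c\in[c_{max},0]$ for which the interface problem (P$_c$) described in the context admits a solution $\theta$.
   Context: Dimensionless travelling-wave formulation of a solid-propellant combustion model ($x<0$ inert solid, $x>0$ gas, interface at $x=0$; $\theta$ dimensionless temperature; $c<0$ dimensionless regression velocity). Data: $\eta>0$; gas reaction heat $Q_g>0$; pyrolysis heat $Q_p\in\mathbb R$; $\Psi:[0,1]\to[0,\infty)$ of class $C^\infty$ with $\Psi(\theta)>0$ for $\theta\in[0,1)$ and $\Psi(1)=0$; a number $c_{max}<0$ and a surface-temperature map $\theta_s:[c_{max},0]\to[0,1]$ (inverse of a pyrolysis law with cut-off at the initial temperature) that is continuous and strictly decreasing with $\theta_s(0)=0$, $\theta_s(c_{max})=1$, and $C^\infty$ on $[c_{max},0)$ with $\theta_s'(c)<0$ there. Define $S(c):=\eta\,\frac{Q_p}{Q_p+Q_g}\,c$. For $c\in[c_{max},0]$, problem (P$_c$) asks for $\theta:\mathbb R\to[0,1]$, continuous, of class $C^2$ on $(-\infty,0]$ and on $[0,\infty)$ (one-sided derivatives at $0$), such that $\theta''+c\theta'=0$ for $x<0$; $\theta''+\eta c\theta'=-\Psi(\theta)$ for $x>0$; $\theta(x)\to0$ as $x\to-\infty$, $\theta(0)=\theta_s(c)$, $\theta(x)\to1$ as $x\to+\infty$, $\theta'(x)\to0$ as $x\to\pm\infty$; and the interface heat balance $\theta'(0^+)-\eta\,\theta'(0^-)=S(c)$.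 *)

theory Defs
  imports "HOL-Analysis.Analysis"
begin

text \<open>C-infinity on a (possibly non-open) set S, with one-sided derivatives at
boundary points: there is a sequence of functions D n with D 0 = f on S and
each D n having derivative D (n+1) within S at every point of S.\<close>
definition smooth_on :: "real set \<Rightarrow> (real \<Rightarrow> real) \<Rightarrow> bool" where
  "smooth_on S f \<longleftrightarrow>
     (\<exists>D :: nat \<Rightarrow> real \<Rightarrow> real. (\<forall>x\<in>S. D 0 x = f x) \<and>
        (\<forall>n. \<forall>x\<in>S. (D n has_real_derivative D (Suc n) x) (at x within S)))"

definition C2_on_with :: "real set \<Rightarrow> (real \<Rightarrow> real) \<Rightarrow> (real \<Rightarrow> real) \<Rightarrow> (real \<Rightarrow> real) \<Rightarrow> bool" where
  "C2_on_with S f f1 f2 \<longleftrightarrow>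
     (\<forall>x\<in>S. (f has_real_derivative f1 x) (at x within S) \<and>
            (f1 has_real_derivative f2 x) (at x within S)) \<and>
     continuous_on S f2"

definition S_flux :: "real \<Rightarrow> real \<Rightarrow> real \<Rightarrow> real \<Rightarrow> real" where
  "S_flux \<eta> Qg Qp c = \<eta> * (Qp / (Qp + Qg)) * c"

definition solves_Pc ::
  "real \<Rightarrow> real \<Rightarrow> real \<Rightarrow> (real \<Rightarrow> real) \<Rightarrow> (real \<Rightarrow> real) \<Rightarrow> real \<Rightarrow> (real \<Rightarrow> real) \<Rightarrow> bool" where
  "solves_Pc \<eta> Qg Qp \<Psi> \<theta>s c \<theta> \<longleftrightarrow>
     (\<forall>x. 0 \<le> \<theta> x \<and> \<theta> x \<le> 1) \<and>
     continuous_on UNIV \<theta> \<and>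
     (\<exists>l1 l2 r1 r2.
        C2_on_with {..0} \<theta> l1 l2 \<and>
        C2_on_with {0..} \<theta> r1 r2 \<and>
        (\<forall>x<0. l2 x + c * l1 x = 0) \<and>
        (\<forall>x>0. r2 x + \<eta> * c * r1 x = - \<Psi> (\<theta> x)) \<and>
        (\<theta> \<longlongrightarrow> 0) at_bot \<and>
        \<theta> 0 = \<theta>s c \<and>
        (\<theta> \<longlongrightarrow> 1) at_top \<and>
        (l1 \<longlongrightarrow> 0) at_bot \<and>
        (r1 \<longlongrightarrow> 0) at_top \<and>
        r1 0 - \<eta> * l1 0 = S_flux \<eta> Qg Qp c)"

end

theory Submission
  imports Defs
begin

lemma stays_pos_fwd:
  fixes g :: "real \<Rightarrow> real"
  assumes ab: "a \<le> b" and cont: "continuous_on {a..b} g" and ga: "g a > 0"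
    and der: "\<And>x. a < x \<Longrightarrow> x < b \<Longrightarrow> g x > 0 \<Longrightarrow> \<exists>d. DERIV g x :> d \<and> d \<ge> 0"
  shows "g b \<ge> g a"
proof -
  define l where "l = g a / 2"
  have pos: "\<forall>x\<in>{a..b}. g x > l"
  proof (rule ccontr)
    assume "\<not> (\<forall>x\<in>{a..b}. g x > l)"
    then obtain x0 where x0: "x0 \<in> {a..b}" "g x0 \<le> l" by (auto simp: not_less)
    define K where "K = {a..b} \<inter> g -` {..l}"
    have "closed K" unfolding K_def by (intro continuous_closed_preimage cont) auto
    moreover have "bounded K" unfolding K_def by (rule bounded_subset[of "{a..b}"]) auto
    ultimately have "compact K" by (simp add: compact_eq_bounded_closed)
    moreover have "K \<noteq> {}" using x0 by (auto simp: K_def)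
    ultimately obtain z where zK: "z \<in> K" and zmin: "\<And>y. y \<in> K \<Longrightarrow> z \<le> y"
      using compact_attains_inf[of K] by auto
    have z: "z \<in> {a..b}" "g z \<le> l" using zK by (auto simp: K_def)
    have "z \<noteq> a" using z ga by (auto simp: l_def)
    then have za: "a < z" using z by auto
    have below: "g y > l" if "a \<le> y" "y < z" for y
    proof (rule ccontr)
      assume "\<not> g y > l"
      then have "y \<in> K" using that z by (auto simp: K_def)
      then show False using zmin[of y] that by auto
    qed
    have "g a \<le> g z"
    proof (rule DERIV_nonneg_imp_increasing_open[of a z])
      show "a \<le> z" using za by simp
      show "continuous_on {a..z} g" by (rule continuous_on_subset[OF cont]) (use z in auto)
      fix x assume "a < x" "x < z"
      moreover have "g x > 0" using below[of x] \<open>a < x\<close> \<open>x < z\<close> ga by (auto simp: l_def)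
      ultimately show "\<exists>y. DERIV g x :> y \<and> y \<ge> 0" using der z by auto
    qed
    then show False using z ga by (auto simp: l_def)
  qed
  show ?thesis
  proof (rule DERIV_nonneg_imp_increasing_open[OF ab _ cont])
    fix x assume "a < x" "x < b"
    moreover have "g x > 0" using pos \<open>a < x\<close> \<open>x < b\<close> ga unfolding l_def
      by (metis atLeastAtMost_iff half_gt_zero less_eq_real_def order.strict_trans)
    ultimately show "\<exists>y. DERIV g x :> y \<and> y \<ge> 0" using der by auto
  qed
qed

lemma stays_pos_bwd:
  fixes g :: "real \<Rightarrow> real"
  assumes ab: "a \<le> b" and cont: "continuous_on {a..b} g" and gb: "g b > 0"
    and der: "\<And>x. a < x \<Longrightarrow> x < b \<Longrightarrow> g x > 0 \<Longrightarrow> \<exists>d. DERIV g x :> d \<and> d \<le> 0"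
  shows "g a \<ge> g b"
proof -
  have "(\<lambda>x. g (- x)) (- a) \<ge> (\<lambda>x. g (- x)) (- b)"
  proof (rule stays_pos_fwd[of "- b" "- a" "\<lambda>x. g (- x)"])
    show "- b \<le> - a" using ab by simp
    show "continuous_on {- b..- a} (\<lambda>x. g (- x))"
      by (rule continuous_on_compose2[OF cont]) (auto intro: continuous_intros)
    show "g (- (- b)) > 0" using gb by simp
    fix x assume x: "- b < x" "x < - a" "g (- x) > 0"
    then obtain d where d: "DERIV g (- x) :> d" "d \<le> 0" using der[of "- x"] by auto
    have "((\<lambda>x. g (- x)) has_real_derivative d * (- 1)) (at x)"
    proof -
      have "((\<lambda>x. - x) has_real_derivative - 1) (at x)" by (auto intro!: derivative_eq_intros)
      from DERIV_chain2[of g d "\<lambda>x. - x" x, OF _ this] d(1) show ?thesis by simp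
    qed
    then show "\<exists>d. ((\<lambda>x. g (- x)) has_real_derivative d) (at x) \<and> d \<ge> 0" using d by auto
  qed
  then show ?thesis by simp
qed


lemma integral_power_shift:
  fixes t0 t C :: real
  assumes "t0 \<le> t"
  shows "integral {t0..t} (\<lambda>s. C * (s - t0) ^ n) = C * (t - t0) ^ Suc n / real (Suc n)"
proof -
  have "((\<lambda>s. C * (s - t0) ^ n) has_integral
        (C * (t - t0) ^ Suc n / real (Suc n) - C * (t0 - t0) ^ Suc n / real (Suc n))) {t0..t}"
  proof (rule fundamental_theorem_of_calculus[OF assms])
    fix x assume "x \<in> {t0..t}"
    show "((\<lambda>s. C * (s - t0) ^ Suc n / real (Suc n)) has_vector_derivative C * (x - t0) ^ n)
          (at x within {t0..t})"
      unfolding has_real_derivative_iff_has_vector_derivative[symmetric]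
    proof -
      have "((\<lambda>s. (s - t0) ^ Suc n) has_real_derivative real (Suc n) * (x - t0) ^ (Suc n - 1) * 1) (at x within {t0..t})"
        by (intro derivative_eq_intros DERIV_pow) auto
      then have "((\<lambda>s. C * (s - t0) ^ Suc n / real (Suc n)) has_real_derivative C * (real (Suc n) * (x - t0) ^ (Suc n - 1) * 1) / real (Suc n)) (at x within {t0..t})"
        by (intro DERIV_cdivide DERIV_cmult)
      then show "((\<lambda>s. C * (s - t0) ^ Suc n / real (Suc n)) has_real_derivative C * (x - t0) ^ n) (at x within {t0..t})"
        by simp
    qed
  qed
  then show ?thesis by (metis (no_types, lifting) diff_self integral_unique power_0_Suc mult_zero_right div_0 diff_zero)
qed

lemma picard:
  fixes f :: "real \<Rightarrow> real \<Rightarrow> real" and t0 t1 y0 L :: real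
  assumes t01: "t0 \<le> t1" and Lpos: "L > 0"
    and cont: "\<And>y. continuous_on {t0..t1} y \<Longrightarrow> continuous_on {t0..t1} (\<lambda>s. f s (y s))"
    and lip: "\<And>s x z. s \<in> {t0..t1} \<Longrightarrow> \<bar>f s x - f s z\<bar> \<le> L * \<bar>x - z\<bar>"
  shows "\<exists>y. y t0 = y0 \<and> continuous_on {t0..t1} y \<and>
           (\<forall>t\<in>{t0..t1}. (y has_real_derivative f t (y t)) (at t within {t0..t1}))"
proof -
  define Y where "Y = rec_nat (\<lambda>t. y0) (\<lambda>n Yn t. y0 + integral {t0..t} (\<lambda>s. f s (Yn s)))"
  have Y0: "Y 0 = (\<lambda>t. y0)" and YS: "\<And>n. Y (Suc n) = (\<lambda>t. y0 + integral {t0..t} (\<lambda>s. f s (Y n s)))"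
    by (simp_all add: Y_def)
  have e1: "Y (Suc n) t = y0 + integral {t0..t} (\<lambda>s. f s (Y n s))" for n t
    by (simp only: YS)
  have contY: "continuous_on {t0..t1} (Y n)" for n
  proof (induction n)
    case 0 show ?case by (simp add: Y0)
  next
    case (Suc n)
    have "(\<lambda>s. f s (Y n s)) integrable_on {t0..t1}" using cont[OF Suc] by (rule integrable_continuous_real)
    then show ?case unfolding YS by (intro continuous_intros indefinite_integral_continuous_1)
  qed
  have intY: "(\<lambda>s. f s (Y n s)) integrable_on {t0..t}" if "t \<in> {t0..t1}" for n t
  proof -
    have "continuous_on {t0..t} (\<lambda>s. f s (Y n s))"
      using continuous_on_subset[OF cont[OF contY]] that by auto
    then show ?thesis by (rule integrable_continuous_real)
  qed
  have "bounded ((\<lambda>s. f s y0) ` {t0..t1})"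
    by (intro compact_imp_bounded compact_continuous_image cont) auto
  then obtain M where Mpos: "M > 0" and M: "\<And>s. s \<in> {t0..t1} \<Longrightarrow> \<bar>f s y0\<bar> \<le> M"
    by (auto simp: bounded_pos)
  have diffbound: "\<bar>Y (Suc k) t - Y k t\<bar> \<le> M * L^k * (t - t0)^Suc k / fact (Suc k)"
    if "t \<in> {t0..t1}" for k t
    using that
  proof (induction k arbitrary: t)
    case 0
    have "\<bar>Y (Suc 0) t - Y 0 t\<bar> = norm (integral {t0..t} (\<lambda>s. f s y0))" by (simp add: YS Y0)
    also have "\<dots> \<le> integral {t0..t} (\<lambda>s. M)"
      using intY[OF 0, of 0] 0 M
      by (intro Henstock_Kurzweil_Integration.integral_norm_bound_integral) (auto simp: Y0)
    also have "\<dots> = M * (t - t0)" using 0 by simp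
    finally show ?case by simp
  next
    case (Suc k)
    have "Y (Suc (Suc k)) t - Y (Suc k) t = integral {t0..t} (\<lambda>s. f s (Y (Suc k) s) - f s (Y k s))"
      using Suc.prems
      by (subst e1[of "Suc k" t], subst e1[of k t]) (simp add: integral_diff intY)
    also have "norm \<dots> \<le> integral {t0..t} (\<lambda>s. (L * M * L^k / fact (Suc k)) * (s - t0)^Suc k)"
    proof (intro Henstock_Kurzweil_Integration.integral_norm_bound_integral)
      show "(\<lambda>s. f s (Y (Suc k) s) - f s (Y k s)) integrable_on {t0..t}"
        using Suc.prems by (intro integrable_diff intY)
      show "(\<lambda>s. (L * M * L^k / fact (Suc k)) * (s - t0)^Suc k) integrable_on {t0..t}"
        by (intro integrable_continuous_real continuous_intros)
      fix s assume s: "s \<in> {t0..t}"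
      then have s1: "s \<in> {t0..t1}" using Suc.prems by auto
      have "norm (f s (Y (Suc k) s) - f s (Y k s)) \<le> L * \<bar>Y (Suc k) s - Y k s\<bar>"
        using lip[OF s1] by simp
      also have "\<dots> \<le> L * (M * L^k * (s - t0)^Suc k / fact (Suc k))"
        using Suc.IH[OF s1] Lpos by (intro mult_left_mono) auto
      also have "\<dots> = (L * M * L^k / fact (Suc k)) * (s - t0)^Suc k" by simp
      finally show "norm (f s (Y (Suc k) s) - f s (Y k s)) \<le> (L * M * L^k / fact (Suc k)) * (s - t0)^Suc k" .
    qed
    also have "\<dots> = (L * M * L^k / fact (Suc k)) * (t - t0)^Suc (Suc k) / real (Suc (Suc k))"
      using Suc.prems by (intro integral_power_shift) auto
    also have "\<dots> = M * L^Suc k * (t - t0)^Suc (Suc k) / fact (Suc (Suc k))"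
      by (simp add: field_simps)
    finally show ?case by simp
  qed
  define b where "b k = M * L^k * (t1 - t0)^Suc k / fact (Suc k)" for k
  have bnn: "b k \<ge> 0" for k using Mpos Lpos t01 by (simp add: b_def)
  have sumb: "summable b"
  proof -
    have "summable (\<lambda>k. inverse (fact (Suc k)) * (L * (t1 - t0))^Suc k)"
      using summable_exp[of "L * (t1 - t0)"] by (subst summable_Suc_iff)
    then have "summable (\<lambda>k. (M / L) * (inverse (fact (Suc k)) * (L * (t1 - t0))^Suc k))"
      by (rule summable_mult)
    moreover have "(\<lambda>k. (M / L) * (inverse (fact (Suc k)) * (L * (t1 - t0))^Suc k)) = b"
    proof
      fix k
      have "(M / L) * (inverse (fact (Suc k)) * (L * (t1 - t0))^Suc k)
            = (M / L) * L^Suc k * (t1 - t0)^Suc k / fact (Suc k)"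
        by (simp only: power_mult_distrib) (simp add: field_simps del: fact_Suc power_Suc)
      also have "\<dots> = b k" using Lpos by (simp add: b_def del: fact_Suc)
      finally show "(M / L) * (inverse (fact (Suc k)) * (L * (t1 - t0))^Suc k) = b k" .
    qed
    ultimately show ?thesis by simp
  qed
  have diffb: "\<bar>Y (Suc k) t - Y k t\<bar> \<le> b k" if "t \<in> {t0..t1}" for k t
  proof -
    have "(t - t0)^Suc k \<le> (t1 - t0)^Suc k" using that by (intro power_mono) auto
    then have "M * L^k * (t - t0)^Suc k / fact (Suc k) \<le> M * L^k * (t1 - t0)^Suc k / fact (Suc k)"
      using Mpos Lpos by (intro divide_right_mono mult_left_mono) auto
    then show ?thesis using diffbound[OF that, of k] by (simp add: b_def)
  qed
  have summ: "summable (\<lambda>k. Y (Suc k) t - Y k t)" if "t \<in> {t0..t1}" for t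
    using diffb[OF that] by (intro summable_comparison_test'[OF sumb]) auto
  define B where "B = suminf b"
  define y where "y t = y0 + suminf (\<lambda>k. Y (Suc k) t - Y k t)" for t
  have Ytel: "Y n t = y0 + (\<Sum>k<n. Y (Suc k) t - Y k t)" for n t
    using sum_lessThan_telescope[of "\<lambda>k. Y k t" n] by (simp add: Y0)
  have Ylim: "(\<lambda>n. Y n t) \<longlonglongrightarrow> y t" if "t \<in> {t0..t1}" for t
  proof -
    have "(\<lambda>n. y0 + (\<Sum>k<n. Y (Suc k) t - Y k t)) \<longlonglongrightarrow> y0 + suminf (\<lambda>k. Y (Suc k) t - Y k t)"
      by (rule tendsto_add[OF tendsto_const summable_LIMSEQ[OF summ[OF that]]])
    moreover have "(\<lambda>n. Y n t) = (\<lambda>n. y0 + (\<Sum>k<n. Y (Suc k) t - Y k t))"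
      by (rule ext) (rule Ytel)
    ultimately show ?thesis by (simp add: y_def)
  qed
  have Ybd: "\<bar>Y n t - y0\<bar> \<le> B" if "t \<in> {t0..t1}" for n t
  proof -
    have "\<bar>Y n t - y0\<bar> = \<bar>\<Sum>k<n. Y (Suc k) t - Y k t\<bar>" by (subst Ytel) simp
    also have "\<dots> \<le> (\<Sum>k<n. \<bar>Y (Suc k) t - Y k t\<bar>)" by (rule sum_abs)
    also have "\<dots> \<le> (\<Sum>k<n. b k)" using diffb[OF that] by (intro sum_mono) auto
    also have "\<dots> \<le> B" unfolding B_def using bnn by (intro sum_le_suminf sumb) auto
    finally show ?thesis .
  qed
  have DC: "(\<lambda>s. f s (y s)) integrable_on {t0..t} \<and>
            (\<lambda>n. integral {t0..t} (\<lambda>s. f s (Y n s))) \<longlonglongrightarrow> integral {t0..t} (\<lambda>s. f s (y s))"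
    if t: "t \<in> {t0..t1}" for t
  proof -
    have h: "(\<lambda>s. M + L * B) integrable_on {t0..t}" by (rule integrable_const_ivl)
    have le: "norm (f s (Y k s)) \<le> M + L * B" if "s \<in> {t0..t}" for k s
    proof -
      have s1: "s \<in> {t0..t1}" using that t by auto
      have "\<bar>f s (Y k s)\<bar> \<le> \<bar>f s y0\<bar> + \<bar>f s (Y k s) - f s y0\<bar>" by linarith
      also have "\<dots> \<le> M + L * \<bar>Y k s - y0\<bar>" using M[OF s1] lip[OF s1, of "Y k s" y0] by linarith
      also have "\<dots> \<le> M + L * B" using Ybd[OF s1, of k] Lpos by (intro add_left_mono mult_left_mono) auto
      finally show ?thesis by simp
    qed
    have conv: "(\<lambda>k. f s (Y k s)) \<longlonglongrightarrow> f s (y s)" if "s \<in> {t0..t}" for s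
    proof -
      have s1: "s \<in> {t0..t1}" using that t by auto
      have "(\<lambda>k. L * \<bar>Y k s - y s\<bar>) \<longlonglongrightarrow> L * \<bar>y s - y s\<bar>"
        by (intro tendsto_intros Ylim s1)
      then have z: "(\<lambda>k. L * \<bar>Y k s - y s\<bar>) \<longlonglongrightarrow> 0" by simp
      have "(\<lambda>k. f s (Y k s) - f s (y s)) \<longlonglongrightarrow> 0"
        by (rule Lim_null_comparison[OF _ z]) (use lip[OF s1] in auto)
      then show ?thesis by (rule LIM_zero_cancel)
    qed
    show ?thesis using dominated_convergence[OF intY[OF t] h le conv] by auto
  qed
  have yeq: "y t = y0 + integral {t0..t} (\<lambda>s. f s (y s))" if t: "t \<in> {t0..t1}" for t
  proof -
    have "(\<lambda>n. Y (Suc n) t) \<longlonglongrightarrow> y t" using Ylim[OF t] by (rule LIMSEQ_Suc)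
    moreover have "(\<lambda>n. Y (Suc n) t) \<longlonglongrightarrow> y0 + integral {t0..t} (\<lambda>s. f s (y s))"
      unfolding YS using DC[OF t] by (intro tendsto_add tendsto_const) auto
    ultimately show ?thesis by (rule LIMSEQ_unique)
  qed
  have gint: "(\<lambda>s. f s (y s)) integrable_on {t0..t1}" using DC[of t1] t01 by auto
  have conty: "continuous_on {t0..t1} y"
  proof (rule continuous_on_eq)
    show "continuous_on {t0..t1} (\<lambda>t. y0 + integral {t0..t} (\<lambda>s. f s (y s)))"
      by (intro continuous_intros indefinite_integral_continuous_1 gint)
    show "\<And>t. t \<in> {t0..t1} \<Longrightarrow> y0 + integral {t0..t} (\<lambda>s. f s (y s)) = y t" using yeq by simp
  qed
  have contg: "continuous_on {t0..t1} (\<lambda>s. f s (y s))" by (rule cont[OF conty])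
  have der: "(y has_real_derivative f t (y t)) (at t within {t0..t1})" if t: "t \<in> {t0..t1}" for t
  proof -
    have "((\<lambda>u. integral {t0..u} (\<lambda>s. f s (y s))) has_real_derivative f t (y t)) (at t within {t0..t1})"
      using integral_has_vector_derivative[OF contg t]
      by (simp add: has_real_derivative_iff_has_vector_derivative)
    then have "((\<lambda>u. y0 + integral {t0..u} (\<lambda>s. f s (y s))) has_real_derivative 0 + f t (y t)) (at t within {t0..t1})"
      by (intro DERIV_add DERIV_const)
    then have "((\<lambda>u. y0 + integral {t0..u} (\<lambda>s. f s (y s))) has_real_derivative f t (y t)) (at t within {t0..t1})"
      by simp
    then show ?thesis
      by (rule has_field_derivative_transform_within[where d=1]) (use t yeq in auto)
  qed
  have "y t0 = y0" using yeq[of t0] t01 by simp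
  then show ?thesis using conty der by blast
qed


lemma inv_max_lip:
  fixes x z d :: real
  assumes d: "d > 0"
  shows "\<bar>1 / max x d - 1 / max z d\<bar> \<le> \<bar>x - z\<bar> / d^2"
proof -
  define u where "u = max x d"
  define v where "v = max z d"
  have u: "u \<ge> d" and v: "v \<ge> d" by (auto simp: u_def v_def)
  have uv: "\<bar>v - u\<bar> \<le> \<bar>x - z\<bar>" by (auto simp: u_def v_def)
  have "\<bar>1 / u - 1 / v\<bar> = \<bar>v - u\<bar> / (u * v)" using u v d by (simp add: field_simps abs_div)
  also have "\<dots> \<le> \<bar>x - z\<bar> / (u * v)" using u v d uv by (intro divide_right_mono) auto
  also have "\<dots> \<le> \<bar>x - z\<bar> / d^2"
    using u v d by (intro divide_left_mono) (auto simp: power2_eq_square intro: mult_mono)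
  finally show ?thesis by (simp add: u_def v_def)
qed

locale psi_setup =
  fixes \<Psi> :: "real \<Rightarrow> real" and \<Lambda> :: real
  assumes Psi_cont: "continuous_on {0..1} \<Psi>"
    and Psi_lip: "\<And>x y. x \<in> {0..1} \<Longrightarrow> y \<in> {0..1} \<Longrightarrow> \<bar>\<Psi> x - \<Psi> y\<bar> \<le> \<Lambda> * \<bar>x - y\<bar>"
    and Lam_pos: "\<Lambda> > 0"
    and Psi_pos: "\<And>t. 0 \<le> t \<Longrightarrow> t < 1 \<Longrightarrow> \<Psi> t > 0"
    and Psi_one: "\<Psi> 1 = 0"
begin

lemma Psi_nn: "t \<in> {0..1} \<Longrightarrow> \<Psi> t \<ge> 0"
  using Psi_pos[of t] Psi_one by (cases "t = 1") (auto simp: less_le)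

lemma Psi_le: "t \<in> {0..1} \<Longrightarrow> \<Psi> t \<le> \<Lambda> * (1 - t)"
  using Psi_lip[of t 1] Psi_one by auto

lemma Psi_le_Lam: "t \<in> {0..1} \<Longrightarrow> \<Psi> t \<le> \<Lambda>"
proof -
  assume t: "t \<in> {0..1}"
  have "\<Lambda> * (1 - t) \<le> \<Lambda> * 1" using t Lam_pos by (intro mult_left_mono) auto
  then show ?thesis using Psi_le[OF t] by simp
qed

lemma eps_solution:
  assumes a: "a \<ge> 0" and e: "0 < \<epsilon>" "\<epsilon> \<le> 1"
  shows "\<exists>p \<delta>. \<delta> > 0 \<and> continuous_on {0..1} p \<and> p 1 = \<epsilon> \<and> (\<forall>t\<in>{0..1}. p t \<ge> \<delta>) \<and>
           (\<forall>t\<in>{0<..<1}. DERIV p t :> a - \<Psi> t / p t)"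
proof -
  define A where "A = a + 1"
  have A: "A \<ge> 1" "a \<le> A" using a by (auto simp: A_def)
  define te where "te = 1 - \<epsilon> / (2 * A)"
  have epsA: "\<epsilon> / (2 * A) \<le> 1 / 2" using e A by (auto simp: field_simps)
  have te: "0 < te" "te < 1" using epsA e A by (auto simp: te_def)
  obtain m where m: "m \<in> {0..te}" and mmin: "\<And>y. y \<in> {0..te} \<Longrightarrow> \<Psi> m \<le> \<Psi> y"
    using continuous_attains_inf[of "{0..te}" \<Psi>] continuous_on_subset[OF Psi_cont, of "{0..te}"] te
    by auto
  define pe where "pe = \<Psi> m"
  have pe: "pe > 0" using m te Psi_pos[of m] by (auto simp: pe_def)
  define \<delta> where "\<delta> = min (\<epsilon> / 2) (pe / (2 * A))"
  have dpos: "\<delta> > 0" using pe e A by (auto simp: \<delta>_def)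
  have d1: "\<delta> \<le> \<epsilon> / 2" by (simp add: \<delta>_def)
  have "\<delta> \<le> pe / (2 * A)" by (simp add: \<delta>_def)
  then have d2: "2 * A * \<delta> \<le> pe" using A by (simp add: pos_le_divide_eq mult.commute)
  define f where "f s y = - (a - \<Psi> (1 - s) / max y \<delta>)" for s y
  have "\<exists>q. q 0 = \<epsilon> \<and> continuous_on {0..1} q \<and>
           (\<forall>t\<in>{0..1}. (q has_real_derivative f t (q t)) (at t within {0..1}))"
  proof (rule picard[where L = "\<Lambda> / \<delta>^2"])
    show "(0::real) \<le> 1" by simp
    show "\<Lambda> / \<delta>^2 > 0" using Lam_pos dpos by simp
    fix y :: "real \<Rightarrow> real"
    assume y: "continuous_on {0..1} y"
    have "continuous_on {0..1} (\<lambda>s. \<Psi> (1 - s))"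
      by (rule continuous_on_compose2[OF Psi_cont]) (auto intro!: continuous_intros)
    then show "continuous_on {0..1} (\<lambda>s. f s (y s))"
      unfolding f_def using dpos by (intro continuous_intros y) auto
  next
    fix s x z :: real assume s: "s \<in> {0..1}"
    have s1: "1 - s \<in> {0..1}" using s by auto
    have "\<bar>f s x - f s z\<bar> = \<bar>\<Psi> (1 - s)\<bar> * \<bar>1 / max x \<delta> - 1 / max z \<delta>\<bar>"
      unfolding f_def by (simp add: abs_mult[symmetric] algebra_simps)
    also have "\<dots> \<le> \<Lambda> * (\<bar>x - z\<bar> / \<delta>^2)"
      using Psi_le_Lam[OF s1] Psi_nn[OF s1] inv_max_lip[OF dpos, of x z]
      by (intro mult_mono) auto
    finally show "\<bar>f s x - f s z\<bar> \<le> \<Lambda> / \<delta>^2 * \<bar>x - z\<bar>" by simp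
  qed
  then obtain q where q0: "q 0 = \<epsilon>" and qc: "continuous_on {0..1} q"
    and qd: "\<And>t. t \<in> {0..1} \<Longrightarrow> (q has_real_derivative f t (q t)) (at t within {0..1})"
    by blast
  define p where "p = (\<lambda>t. q (1 - t))"
  have pc: "continuous_on {0..1} p"
    unfolding p_def by (rule continuous_on_compose2[OF qc]) (auto intro!: continuous_intros)
  have p1: "p 1 = \<epsilon>" using q0 by (simp add: p_def)
  have pd0: "DERIV p t :> a - \<Psi> t / max (p t) \<delta>" if t: "t \<in> {0<..<1}" for t
  proof -
    have "(q has_real_derivative f (1 - t) (q (1 - t))) (at (1 - t))"
      using qd[of "1 - t"] t by (simp add: at_within_interior[of _ "{0..1}"])
    moreover have "((\<lambda>x. 1 - x) has_real_derivative - 1) (at t)"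
      by (auto intro!: derivative_eq_intros)
    ultimately have "((\<lambda>x. q (1 - x)) has_real_derivative f (1 - t) (q (1 - t)) * (- 1)) (at t)"
      by (rule DERIV_chain2)
    then show ?thesis by (simp add: p_def f_def)
  qed
  have lb1: "p t \<ge> \<epsilon> - a * (1 - t)" if t: "t \<in> {0..1}" for t
  proof -
    have "(\<lambda>x. a * x - p x) t \<le> (\<lambda>x. a * x - p x) 1"
    proof (rule DERIV_nonneg_imp_increasing_open[of t 1 "\<lambda>x. a * x - p x"])
      show "t \<le> 1" using t by simp
      show "continuous_on {t..1} (\<lambda>x. a * x - p x)"
        by (intro continuous_intros continuous_on_subset[OF pc]) (use t in auto)
      fix x assume x: "t < x" "x < 1"
      then have x01: "x \<in> {0<..<1}" using t by auto
      have "DERIV (\<lambda>x. a * x - p x) x :> a * 1 - (a - \<Psi> x / max (p x) \<delta>)"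
        by (rule DERIV_diff[OF DERIV_cmult[OF DERIV_ident] pd0[OF x01]])
      moreover have "a * 1 - (a - \<Psi> x / max (p x) \<delta>) \<ge> 0"
        using Psi_nn[of x] x01 dpos by auto
      ultimately show "\<exists>y. DERIV (\<lambda>x. a * x - p x) x :> y \<and> y \<ge> 0" by blast
    qed
    then show ?thesis using p1 by (simp add: algebra_simps)
  qed
  have lb2: "p t \<ge> \<delta>" if t: "t \<in> {te..1}" for t
  proof -
    have "a * (1 - t) \<le> a * (\<epsilon> / (2 * A))" using t a by (intro mult_left_mono) (auto simp: te_def)
    also have "\<dots> \<le> \<epsilon> / 2" using A e by (auto simp: field_simps intro: mult_right_mono)
    finally show ?thesis using lb1[of t] t te d1 by auto
  qed
  have lb: "p t \<ge> \<delta>" if t: "t \<in> {0..1}" for t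
  proof (cases "t \<ge> te")
    case True then show ?thesis using lb2 t by auto
  next
    case False
    show ?thesis
    proof (rule ccontr)
      assume "\<not> p t \<ge> \<delta>"
      then have pt: "(\<lambda>x. \<delta> - p x) t > 0" by simp
      have "(\<lambda>x. \<delta> - p x) te \<ge> (\<lambda>x. \<delta> - p x) t"
      proof (rule stays_pos_fwd[of t te "\<lambda>x. \<delta> - p x", OF _ _ pt])
        show "t \<le> te" using False by simp
        show "continuous_on {t..te} (\<lambda>x. \<delta> - p x)"
          by (intro continuous_intros continuous_on_subset[OF pc]) (use t te in auto)
        fix x assume x: "t < x" "x < te" "\<delta> - p x > 0"
        then have x01: "x \<in> {0<..<1}" using t te by auto
        have "DERIV (\<lambda>x. \<delta> - p x) x :> 0 - (a - \<Psi> x / max (p x) \<delta>)"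
          by (rule DERIV_diff[OF DERIV_const pd0[OF x01]])
        moreover have "0 - (a - \<Psi> x / max (p x) \<delta>) \<ge> 0"
        proof -
          have mx: "max (p x) \<delta> = \<delta>" using x by auto
          have "pe \<le> \<Psi> x" using mmin[of x] x t by (auto simp: pe_def)
          then have "2 * A * \<delta> \<le> \<Psi> x" using d2 by simp
          then have "2 * A \<le> \<Psi> x / \<delta>" using dpos by (simp add: field_simps)
          then show ?thesis using mx A by simp
        qed
        ultimately show "\<exists>y. DERIV (\<lambda>x. \<delta> - p x) x :> y \<and> y \<ge> 0" by blast
      qed
      then have "p te < \<delta>" using pt by simp
      moreover have "p te \<ge> \<delta>" using lb2[of te] te by simp
      ultimately show False by simp
    qed
  qed
  have pd: "\<forall>t\<in>{0<..<1}. DERIV p t :> a - \<Psi> t / p t"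
  proof
    fix t :: real assume t: "t \<in> {0<..<1}"
    have "max (p t) \<delta> = p t" using lb[of t] t by auto
    then show "DERIV p t :> a - \<Psi> t / p t" using pd0[OF t] by simp
  qed
  show ?thesis using dpos pc p1 lb pd by blast
qed


lemma eps_mono:
  assumes c1: "continuous_on {0..1} p1" and l1: "\<And>t. t \<in> {0..1} \<Longrightarrow> p1 t \<ge> d1" and d1: "d1 > 0"
    and D1: "\<And>t. t \<in> {0<..<1} \<Longrightarrow> DERIV p1 t :> a - \<Psi> t / p1 t"
    and c2: "continuous_on {0..1} p2" and l2: "\<And>t. t \<in> {0..1} \<Longrightarrow> p2 t \<ge> d2" and d2: "d2 > 0"
    and D2: "\<And>t. t \<in> {0<..<1} \<Longrightarrow> DERIV p2 t :> a - \<Psi> t / p2 t"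
    and lt: "p1 1 < p2 1" and t: "t \<in> {0..1}"
  shows "p1 t < p2 t"
proof -
  define K where "K = \<Lambda> / (d1 * d2)"
  define g where "g = (\<lambda>x. (p2 x - p1 x) * exp (- K * x))"
  have "g t \<ge> g 1"
  proof (rule stays_pos_bwd[of t 1 g])
    show "t \<le> 1" using t by simp
    show "continuous_on {t..1} g" unfolding g_def
      by (intro continuous_intros continuous_on_subset[OF c1] continuous_on_subset[OF c2]) (use t in auto)
    show "g 1 > 0" using lt by (simp add: g_def)
    fix x assume x: "t < x" "x < 1" "g x > 0"
    then have x01: "x \<in> {0<..<1}" and x01': "x \<in> {0..1}" using t by auto
    have Dx: "p2 x - p1 x > 0" using x(3) by (simp add: g_def zero_less_mult_iff)
    have "DERIV g x :> ((a - \<Psi> x / p2 x) - (a - \<Psi> x / p1 x)) * exp (- K * x)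
                       + (p2 x - p1 x) * (exp (- K * x) * (- K * 1))"
    proof -
      have d1': "DERIV (\<lambda>x. p2 x - p1 x) x :> (a - \<Psi> x / p2 x) - (a - \<Psi> x / p1 x)"
        by (rule DERIV_diff[OF D2[OF x01] D1[OF x01]])
      have d2': "DERIV (\<lambda>x. exp (- K * x)) x :> exp (- K * x) * (- K * 1)"
        by (rule DERIV_chain2[OF DERIV_exp DERIV_cmult[OF DERIV_ident]])
      show ?thesis unfolding g_def by (rule DERIV_cong[OF DERIV_mult[OF d1' d2']]) (simp add: algebra_simps)
    qed
    moreover have "((a - \<Psi> x / p2 x) - (a - \<Psi> x / p1 x)) * exp (- K * x)
                       + (p2 x - p1 x) * (exp (- K * x) * (- K * 1)) \<le> 0"
    proof -
      have p1p: "p1 x > 0" and p2p: "p2 x > 0" using l1[OF x01'] l2[OF x01'] d1 d2 by auto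
      have e1: "(a - \<Psi> x / p2 x) - (a - \<Psi> x / p1 x) = \<Psi> x * (p2 x - p1 x) / (p1 x * p2 x)"
        using p1p p2p by (simp add: field_simps)
      have "\<Psi> x * (p2 x - p1 x) / (p1 x * p2 x) \<le> \<Lambda> * (p2 x - p1 x) / (d1 * d2)"
      proof (rule frac_le)
        show "0 \<le> \<Lambda> * (p2 x - p1 x)" using Lam_pos Dx by simp
        show "\<Psi> x * (p2 x - p1 x) \<le> \<Lambda> * (p2 x - p1 x)"
          using Psi_le_Lam[OF x01'] Dx by (intro mult_right_mono) auto
        show "0 < d1 * d2" using d1 d2 by simp
        show "d1 * d2 \<le> p1 x * p2 x" using l1[OF x01'] l2[OF x01'] d1 d2 by (intro mult_mono) auto
      qed
      also have "\<dots> = K * (p2 x - p1 x)" by (simp add: K_def)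
      finally have "(a - \<Psi> x / p2 x) - (a - \<Psi> x / p1 x) \<le> K * (p2 x - p1 x)" using e1 by simp
      then have "((a - \<Psi> x / p2 x) - (a - \<Psi> x / p1 x)) * exp (- K * x) \<le> K * (p2 x - p1 x) * exp (- K * x)"
        by (intro mult_right_mono) auto
      then show ?thesis by (simp add: algebra_simps)
    qed
    ultimately show "\<exists>d. DERIV g x :> d \<and> d \<le> 0" by blast
  qed
  moreover have "g 1 > 0" using lt by (simp add: g_def)
  ultimately have "g t > 0" by simp
  then show ?thesis by (simp add: g_def zero_less_mult_iff)
qed

definition Wspec :: "real \<Rightarrow> (real \<Rightarrow> real) \<Rightarrow> bool" where
  "Wspec a W \<longleftrightarrow> continuous_on {0..1} W \<and> W 1 = 0 \<and> (\<forall>t\<in>{0..<1}. W t > 0) \<and>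
     (\<forall>t\<in>{0<..<1}. DERIV W t :> a - \<Psi> t / W t)"


lemma W_exists:
  assumes a: "a \<ge> 0"
  shows "\<exists>W. Wspec a W"
proof -
  define Q where "Q n p d \<longleftrightarrow> d > 0 \<and> continuous_on {0..1} p \<and> p 1 = 1 / (real n + 1) \<and>
      (\<forall>t\<in>{0..1}. p t \<ge> d) \<and> (\<forall>t\<in>{0<..<1}. DERIV p t :> a - \<Psi> t / p t)" for n p d
  have "\<forall>n. \<exists>p. \<exists>d. Q n p d"
  proof
    fix n :: nat
    have "0 < 1 / (real n + 1)" "1 / (real n + 1) \<le> 1" by (auto simp: field_simps)
    from eps_solution[OF a this] show "\<exists>p d. Q n p d" unfolding Q_def by blast
  qed
  then obtain P where "\<forall>n. \<exists>d. Q n (P n) d" by metis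
  then obtain Dl where PQ: "\<And>n. Q n (P n) (Dl n)" by metis
  have Pc: "continuous_on {0..1} (P n)" for n using PQ[of n] by (simp add: Q_def)
  have P1: "P n 1 = 1 / (real n + 1)" for n using PQ[of n] by (simp add: Q_def)
  have Pl: "\<And>t. t \<in> {0..1} \<Longrightarrow> P n t \<ge> Dl n" for n using PQ[of n] by (simp add: Q_def)
  have Dlp: "Dl n > 0" for n using PQ[of n] by (simp add: Q_def)
  have PD: "\<And>t. t \<in> {0<..<1} \<Longrightarrow> DERIV (P n) t :> a - \<Psi> t / P n t" for n using PQ[of n] by (simp add: Q_def)
  have Ppos: "P n t > 0" if "t \<in> {0..1}" for n t using Pl[OF that, of n] Dlp[of n] by simp
  have Pdec: "P (Suc n) t < P n t" if t: "t \<in> {0..1}" for n t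
  proof (rule eps_mono[OF Pc Pl Dlp PD Pc Pl Dlp PD _ t])
    show "P (Suc n) 1 < P n 1" unfolding P1 by (auto simp: field_simps)
  qed
  have decs: "decseq (\<lambda>n. P n t)" if "t \<in> {0..1}" for t
    using Pdec[OF that] by (intro decseq_SucI less_imp_le)
  define W where "W t = lim (\<lambda>n. P n t)" for t
  have Wlim: "(\<lambda>n. P n t) \<longlonglongrightarrow> W t" if t: "t \<in> {0..1}" for t
  proof -
    obtain L where "(\<lambda>n. P n t) \<longlonglongrightarrow> L" using decseq_convergent[OF decs[OF t], of 0] Ppos[OF t] less_imp_le
      by metis
    then show ?thesis unfolding W_def by (simp add: limI)
  qed
  have Wnn: "W t \<ge> 0" if t: "t \<in> {0..1}" for t
    using Wlim[OF t] Ppos[OF t] by (intro LIMSEQ_le_const) (auto intro: less_imp_le)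
  have PleP0: "P n t \<le> P 0 t" if t: "t \<in> {0..1}" for n t
    using decs[OF t] by (simp add: decseq_def)
  have "bounded (P 0 ` {0..1})" by (intro compact_imp_bounded compact_continuous_image Pc) auto
  then obtain C0 where C0: "\<And>t. t \<in> {0..1} \<Longrightarrow> \<bar>P 0 t\<bar> \<le> C0" unfolding bounded_iff by fastforce
  have Peq: "P n t * P n t = 1 / (real n + 1) * (1 / (real n + 1)) - integral {t..1} (\<lambda>s. 2 * (a * P n s - \<Psi> s))"
    if t: "t \<in> {0..1}" for n t
  proof -
    have "((\<lambda>s. 2 * (a * P n s - \<Psi> s)) has_integral (P n 1 * P n 1 - P n t * P n t)) {t..1}"
    proof (rule fundamental_theorem_of_calculus_interior[where f = "\<lambda>s. P n s * P n s"])
      show "t \<le> 1" using t by simp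
      show "continuous_on {t..1} (\<lambda>s. P n s * P n s)"
        by (intro continuous_intros continuous_on_subset[OF Pc]) (use t in auto)
      fix x assume x: "x \<in> {t<..<1}"
      then have x01: "x \<in> {0<..<1}" and x01': "x \<in> {0..1}" using t by auto
      have "DERIV (\<lambda>s. P n s * P n s) x :> (a - \<Psi> x / P n x) * P n x + (a - \<Psi> x / P n x) * P n x"
        by (rule DERIV_mult[OF PD[OF x01] PD[OF x01]])
      moreover have "(a - \<Psi> x / P n x) * P n x + (a - \<Psi> x / P n x) * P n x = 2 * (a * P n x - \<Psi> x)"
        using Ppos[OF x01', of n] by (simp add: field_simps)
      ultimately show "((\<lambda>s. P n s * P n s) has_vector_derivative 2 * (a * P n x - \<Psi> x)) (at x)"
        by (simp add: has_real_derivative_iff_has_vector_derivative[symmetric])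
    qed
    then have "integral {t..1} (\<lambda>s. 2 * (a * P n s - \<Psi> s)) = P n 1 * P n 1 - P n t * P n t"
      by (rule integral_unique)
    then show ?thesis using P1[of n] by simp
  qed
  have DC: "(\<lambda>s. 2 * (a * W s - \<Psi> s)) integrable_on {t..1} \<and>
      (\<lambda>n. integral {t..1} (\<lambda>s. 2 * (a * P n s - \<Psi> s))) \<longlonglongrightarrow> integral {t..1} (\<lambda>s. 2 * (a * W s - \<Psi> s))"
    if t: "t \<in> {0..1}" for t
  proof -
    have fi: "(\<lambda>s. 2 * (a * P n s - \<Psi> s)) integrable_on {t..1}" for n
      by (intro integrable_continuous_real continuous_intros continuous_on_subset[OF Pc]
          continuous_on_subset[OF Psi_cont]) (use t in auto)
    have hi: "(\<lambda>s. 2 * (a * C0 + \<Lambda>)) integrable_on {t..1}" by (rule integrable_const_ivl)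
    have le: "norm (2 * (a * P n s - \<Psi> s)) \<le> 2 * (a * C0 + \<Lambda>)" if s: "s \<in> {t..1}" for n s
    proof -
      have s01: "s \<in> {0..1}" using s t by auto
      have "P n s \<le> C0" using PleP0[OF s01, of n] C0[OF s01] by simp
      then have "a * P n s \<le> a * C0" using a by (intro mult_left_mono) auto
      moreover have "a * P n s \<ge> 0" using a Ppos[OF s01, of n] by simp
      moreover have "0 \<le> \<Psi> s" "\<Psi> s \<le> \<Lambda>" using Psi_nn[OF s01] Psi_le_Lam[OF s01] by auto
      ultimately show ?thesis by simp
    qed
    have conv: "(\<lambda>n. 2 * (a * P n s - \<Psi> s)) \<longlonglongrightarrow> 2 * (a * W s - \<Psi> s)" if s: "s \<in> {t..1}" for s
      using s t by (intro tendsto_intros Wlim) auto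
    show ?thesis using dominated_convergence[OF fi hi le conv] by auto
  qed
  define \<phi> where "\<phi> s = 2 * (\<Psi> s - a * W s)" for s
  have WW: "W t * W t = integral {t..1} \<phi>" if t: "t \<in> {0..1}" for t
  proof -
    have "(\<lambda>n. P n t * P n t) \<longlonglongrightarrow> W t * W t" by (intro tendsto_intros Wlim t)
    moreover have "(\<lambda>n. P n t * P n t) \<longlonglongrightarrow> 0 * 0 - integral {t..1} (\<lambda>s. 2 * (a * W s - \<Psi> s))"
    proof -
      have "(\<lambda>n. 1 / (real n + 1)) \<longlonglongrightarrow> 0" using LIMSEQ_inverse_real_of_nat by (simp add: inverse_eq_divide add.commute)
      then have "(\<lambda>n. 1 / (real n + 1) * (1 / (real n + 1)) - integral {t..1} (\<lambda>s. 2 * (a * P n s - \<Psi> s)))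
          \<longlonglongrightarrow> 0 * 0 - integral {t..1} (\<lambda>s. 2 * (a * W s - \<Psi> s))"
        using DC[OF t] by (intro tendsto_intros) auto
      then show ?thesis using Peq[OF t] by simp
    qed
    ultimately have "W t * W t = 0 * 0 - integral {t..1} (\<lambda>s. 2 * (a * W s - \<Psi> s))"
      by (rule LIMSEQ_unique)
    also have "\<dots> = integral {t..1} \<phi>"
    proof -
      have "integral {t..1} \<phi> = integral {t..1} (\<lambda>s. - (2 * (a * W s - \<Psi> s)))"
        unfolding \<phi>_def by (rule integral_cong) (simp add: algebra_simps)
      also have "\<dots> = - integral {t..1} (\<lambda>s. 2 * (a * W s - \<Psi> s))" by (rule integral_neg)
      finally show ?thesis by simp
    qed
    finally show ?thesis .
  qed
  have phii: "\<phi> integrable_on {0..1}"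
  proof -
    have "(\<lambda>s. - (2 * (a * W s - \<Psi> s))) integrable_on {0..1}"
      using DC[of 0] by (intro integrable_neg) auto
    then show ?thesis unfolding \<phi>_def by (simp add: algebra_simps)
  qed
  define I where "I t = integral {t..1} \<phi>" for t
  have Ic: "continuous_on {0..1} I" unfolding I_def by (rule indefinite_integral_continuous_1'[OF phii])
  have Wsq: "W t = sqrt (I t)" if t: "t \<in> {0..1}" for t
    using WW[OF t] Wnn[OF t] unfolding I_def by (metis real_sqrt_abs abs_of_nonneg power2_eq_square)
  have Wc: "continuous_on {0..1} W"
    by (rule continuous_on_eq[of _ "\<lambda>t. sqrt (I t)"]) (use Ic Wsq in \<open>auto intro: continuous_intros\<close>)
  have W1: "W 1 = 0" using Wsq[of 1] by (simp add: I_def)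
  have phic: "continuous_on {0..1} \<phi>" unfolding \<phi>_def by (intro continuous_intros Psi_cont Wc)
  have Id: "DERIV I t :> - \<phi> t" if t: "t \<in> {0<..<1}" for t
  proof -
    have "((\<lambda>u. integral {0..u} \<phi>) has_real_derivative \<phi> t) (at t within {0..1})"
      using integral_has_vector_derivative[OF phic, of t] t
      by (simp add: has_real_derivative_iff_has_vector_derivative)
    then have "((\<lambda>u. integral {0..u} \<phi>) has_real_derivative \<phi> t) (at t)"
      using t by (simp add: at_within_interior[of _ "{0..1}"])
    then have "((\<lambda>u. integral {0..1} \<phi> - integral {0..u} \<phi>) has_real_derivative 0 - \<phi> t) (at t)"
      by (intro DERIV_diff DERIV_const)
    then have "((\<lambda>u. integral {0..1} \<phi> - integral {0..u} \<phi>) has_real_derivative - \<phi> t) (at t)"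
      by simp
    then show ?thesis
    proof (rule has_field_derivative_transform_within_open[where S = "{0<..<1}"])
      show "open {0<..<(1::real)}" by simp
      show "t \<in> {0<..<1}" using t .
      fix x :: real assume x: "x \<in> {0<..<1}"
      have "integral {0..x} \<phi> + integral {x..1} \<phi> = integral {0..1} \<phi>"
        using x by (intro Henstock_Kurzweil_Integration.integral_combine[OF _ _ phii]) auto
      then show "integral {0..1} \<phi> - integral {0..x} \<phi> = I x" by (simp add: I_def)
    qed
  qed
  have Wpos: "W t > 0" if t: "t \<in> {0..<1}" for t
  proof (rule ccontr)
    assume "\<not> W t > 0"
    then have W0: "W t = 0" using Wnn[of t] t by auto
    have It: "I t = 0" using WW[of t] t W0 by (simp add: I_def)
    have phit: "\<phi> t > 0" using Psi_pos[of t] t W0 by (simp add: \<phi>_def)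
    obtain d where d: "d > 0" and dd: "\<And>x. x \<in> {0..1} \<Longrightarrow> dist x t < d \<Longrightarrow> dist (\<phi> x) (\<phi> t) < \<phi> t"
      using phic t phit unfolding continuous_on_iff by (metis atLeastAtMost_iff atLeastLessThan_iff less_eq_real_def)
    define t2 where "t2 = min (t + d / 2) ((t + 1) / 2)"
    have t2: "t < t2" "t2 < 1" using t d by (auto simp: t2_def min_def)
    have "I t > I t2"
    proof (rule DERIV_neg_imp_decreasing_open[OF t2(1)])
      show "continuous_on {t..t2} I" by (rule continuous_on_subset[OF Ic]) (use t t2 in auto)
      fix x assume x: "t < x" "x < t2"
      then have x01: "x \<in> {0<..<1}" using t t2 by auto
      have "dist x t < d" using x t2 d by (auto simp: t2_def dist_real_def)
      then have "\<phi> x > 0" using dd[of x] x01 by (auto simp: dist_real_def)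
      then show "\<exists>y. DERIV I x :> y \<and> y < 0" using Id[OF x01] by auto
    qed
    moreover have "I t2 \<ge> 0" proof -
      have eq: "I t2 = W t2 * W t2" using WW[of t2] t t2 by (simp add: I_def)
      show ?thesis by (simp add: eq)
    qed
    ultimately show False using It by simp
  qed
  have WD: "DERIV W t :> a - \<Psi> t / W t" if t: "t \<in> {0<..<1}" for t
  proof -
    have eq: "I t = W t * W t" using WW[of t] t by (simp add: I_def)
    have Ipos: "I t > 0" using Wpos[of t] t by (simp add: eq)
    have "((\<lambda>u. sqrt (I u)) has_real_derivative inverse (sqrt (I t)) / 2 * (- \<phi> t)) (at t)"
      by (rule DERIV_chain2[OF DERIV_real_sqrt[OF Ipos] Id[OF t]])
    moreover have "inverse (sqrt (I t)) / 2 * (- \<phi> t) = a - \<Psi> t / W t"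
      using Wsq[of t] t Wpos[of t] by (auto simp: \<phi>_def field_simps)
    ultimately have "((\<lambda>u. sqrt (I u)) has_real_derivative a - \<Psi> t / W t) (at t)" by simp
    then show ?thesis
      by (rule has_field_derivative_transform_within_open[where S = "{0<..<1}"]) (use t Wsq in auto)
  qed
  have "Wspec a W" unfolding Wspec_def using Wc W1 Wpos WD by blast
  then show ?thesis by blast
qed


lemma Wspec_D:
  assumes "Wspec a W"
  shows "continuous_on {0..1} W" "W 1 = 0" "\<And>t. t \<in> {0..<1} \<Longrightarrow> W t > 0"
    "\<And>t. t \<in> {0<..<1} \<Longrightarrow> DERIV W t :> a - \<Psi> t / W t"
    "\<And>t. t \<in> {0..1} \<Longrightarrow> W t \<ge> 0"
proof -
  show "continuous_on {0..1} W" "W 1 = 0" "\<And>t. t \<in> {0..<1} \<Longrightarrow> W t > 0"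
    "\<And>t. t \<in> {0<..<1} \<Longrightarrow> DERIV W t :> a - \<Psi> t / W t"
    using assms by (auto simp: Wspec_def)
  fix t :: real assume "t \<in> {0..1}"
  then show "W t \<ge> 0" using assms unfolding Wspec_def
    by (cases "t = 1") (auto intro: less_imp_le)
qed

lemma W_mono:
  assumes Wa: "Wspec a Wa" and Wb: "Wspec b Wb" and ab: "a \<le> b" and t: "t \<in> {0..1}"
  shows "Wb t \<le> Wa t"
proof (cases "t = 1")
  case True then show ?thesis using Wspec_D(2)[OF Wa] Wspec_D(2)[OF Wb] by simp
next
  case False
  then have t1: "t < 1" using t by simp
  show ?thesis
  proof (rule ccontr)
    assume "\<not> Wb t \<le> Wa t"
    then have pos: "(\<lambda>x. Wb x - Wa x) t > 0" by simp
    have "(\<lambda>x. Wb x - Wa x) 1 \<ge> (\<lambda>x. Wb x - Wa x) t"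
    proof (rule stays_pos_fwd[of t 1 "\<lambda>x. Wb x - Wa x", OF _ _ pos])
      show "t \<le> 1" using t1 by simp
      show "continuous_on {t..1} (\<lambda>x. Wb x - Wa x)"
        by (intro continuous_intros continuous_on_subset[OF Wspec_D(1)[OF Wa]]
            continuous_on_subset[OF Wspec_D(1)[OF Wb]]) (use t in auto)
      fix x assume x: "t < x" "x < 1" "Wb x - Wa x > 0"
      then have x01: "x \<in> {0<..<1}" using t by auto
      have "DERIV (\<lambda>x. Wb x - Wa x) x :> (b - \<Psi> x / Wb x) - (a - \<Psi> x / Wa x)"
        by (rule DERIV_diff[OF Wspec_D(4)[OF Wb x01] Wspec_D(4)[OF Wa x01]])
      moreover have "(b - \<Psi> x / Wb x) - (a - \<Psi> x / Wa x) \<ge> 0"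
      proof -
        have "Wa x > 0" using Wspec_D(3)[OF Wa, of x] x01 by auto
        then have "\<Psi> x / Wb x \<le> \<Psi> x / Wa x"
          using x Psi_nn[of x] x01 by (intro divide_left_mono) auto
        then show ?thesis using ab by simp
      qed
      ultimately show "\<exists>d. DERIV (\<lambda>x. Wb x - Wa x) x :> d \<and> d \<ge> 0" by blast
    qed
    then show False using pos Wspec_D(2)[OF Wa] Wspec_D(2)[OF Wb] by simp
  qed
qed

lemma W_lip:
  assumes Wa: "Wspec a Wa" and Wb: "Wspec b Wb" and ab: "a \<le> b" and t: "t \<in> {0..1}"
  shows "Wa t - Wb t \<le> (b - a) * (1 - t)"
proof -
  have "(\<lambda>x. Wa x - Wb x + (b - a) * x) t \<le> (\<lambda>x. Wa x - Wb x + (b - a) * x) 1"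
  proof (rule DERIV_nonneg_imp_increasing_open[of t 1 "\<lambda>x. Wa x - Wb x + (b - a) * x"])
    show "t \<le> 1" using t by simp
    show "continuous_on {t..1} (\<lambda>x. Wa x - Wb x + (b - a) * x)"
      by (intro continuous_intros continuous_on_subset[OF Wspec_D(1)[OF Wa]]
          continuous_on_subset[OF Wspec_D(1)[OF Wb]]) (use t in auto)
    fix x assume x: "t < x" "x < 1"
    then have x01: "x \<in> {0<..<1}" using t by auto
    have "DERIV (\<lambda>x. Wa x - Wb x + (b - a) * x) x :> (a - \<Psi> x / Wa x) - (b - \<Psi> x / Wb x) + (b - a) * 1"
      by (rule DERIV_add[OF DERIV_diff[OF Wspec_D(4)[OF Wa x01] Wspec_D(4)[OF Wb x01]] DERIV_cmult[OF DERIV_ident]])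
    moreover have "(a - \<Psi> x / Wa x) - (b - \<Psi> x / Wb x) + (b - a) * 1 \<ge> 0"
    proof -
      have "Wb x > 0" using Wspec_D(3)[OF Wb, of x] x01 by auto
      moreover have "Wb x \<le> Wa x" using W_mono[OF Wa Wb ab, of x] x01 by auto
      ultimately have "\<Psi> x / Wa x \<le> \<Psi> x / Wb x"
        using Psi_nn[of x] x01 by (intro divide_left_mono) auto
      then show ?thesis by simp
    qed
    ultimately show "\<exists>y. DERIV (\<lambda>x. Wa x - Wb x + (b - a) * x) x :> y \<and> y \<ge> 0" by blast
  qed
  then show ?thesis using Wspec_D(2)[OF Wa] Wspec_D(2)[OF Wb] by (simp add: algebra_simps)
qed

lemma W_bound:
  assumes a: "a \<ge> 0" and W: "Wspec a W" and t: "t \<in> {0..1}"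
  shows "W t \<le> sqrt \<Lambda> * (1 - t)"
proof -
  have "(\<lambda>x. W x * W x - \<Lambda> * ((1 - x) * (1 - x))) t \<le> (\<lambda>x. W x * W x - \<Lambda> * ((1 - x) * (1 - x))) 1"
  proof (rule DERIV_nonneg_imp_increasing_open[of t 1 "\<lambda>x. W x * W x - \<Lambda> * ((1 - x) * (1 - x))"])
    show "t \<le> 1" using t by simp
    show "continuous_on {t..1} (\<lambda>x. W x * W x - \<Lambda> * ((1 - x) * (1 - x)))"
      by (intro continuous_intros continuous_on_subset[OF Wspec_D(1)[OF W]]) (use t in auto)
    fix x assume x: "t < x" "x < 1"
    then have x01: "x \<in> {0<..<1}" and x01': "x \<in> {0..1}" using t by auto
    have d1: "DERIV (\<lambda>x. 1 - x) x :> -1" by (auto intro!: derivative_eq_intros)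
    have "DERIV (\<lambda>x. W x * W x - \<Lambda> * ((1 - x) * (1 - x))) x :>
        (a - \<Psi> x / W x) * W x + (a - \<Psi> x / W x) * W x - \<Lambda> * ((-1) * (1 - x) + (-1) * (1 - x))"
      by (rule DERIV_diff[OF DERIV_mult[OF Wspec_D(4)[OF W x01] Wspec_D(4)[OF W x01]]
            DERIV_cmult[OF DERIV_mult[OF d1 d1]]])
    moreover have "(a - \<Psi> x / W x) * W x + (a - \<Psi> x / W x) * W x - \<Lambda> * ((-1) * (1 - x) + (-1) * (1 - x)) \<ge> 0"
    proof -
      have Wp: "W x > 0" using Wspec_D(3)[OF W, of x] x01 by auto
      have e: "(a - \<Psi> x / W x) * W x + (a - \<Psi> x / W x) * W x - \<Lambda> * ((-1) * (1 - x) + (-1) * (1 - x))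
          = 2 * (a * W x) + 2 * (\<Lambda> * (1 - x) - \<Psi> x)" using Wp by (simp add: field_simps)
      have "a * W x \<ge> 0" using a Wp by simp
      moreover have "\<Lambda> * (1 - x) - \<Psi> x \<ge> 0" using Psi_le[OF x01'] by simp
      ultimately show ?thesis unfolding e by simp
    qed
    ultimately show "\<exists>y. DERIV (\<lambda>x. W x * W x - \<Lambda> * ((1 - x) * (1 - x))) x :> y \<and> y \<ge> 0" by blast
  qed
  then have "W t * W t \<le> \<Lambda> * ((1 - t) * (1 - t))" using Wspec_D(2)[OF W] by simp
  then have "sqrt (W t * W t) \<le> sqrt (\<Lambda> * ((1 - t) * (1 - t)))" by (rule real_sqrt_le_mono)
  moreover have "sqrt (W t * W t) = W t" using Wspec_D(5)[OF W t] by (simp add: real_sqrt_mult_self)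
  moreover have "sqrt (\<Lambda> * ((1 - t) * (1 - t))) = sqrt \<Lambda> * (1 - t)"
    using t by (simp add: real_sqrt_mult real_sqrt_mult_self)
  ultimately show ?thesis by simp
qed

lemma W_lin_decr:
  assumes W: "Wspec a W" and st: "0 \<le> s" "s < t" "t \<le> 1"
  shows "W t - a * t < W s - a * s"
proof -
  have "(\<lambda>x. W x - a * x) s > (\<lambda>x. W x - a * x) t"
  proof (rule DERIV_neg_imp_decreasing_open[of s t "\<lambda>x. W x - a * x"])
    show "s < t" using st by simp
    show "continuous_on {s..t} (\<lambda>x. W x - a * x)"
      by (intro continuous_intros continuous_on_subset[OF Wspec_D(1)[OF W]]) (use st in auto)
    fix x assume x: "s < x" "x < t"
    then have x01: "x \<in> {0<..<1}" using st by auto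
    have "DERIV (\<lambda>x. W x - a * x) x :> (a - \<Psi> x / W x) - a * 1"
      by (rule DERIV_diff[OF Wspec_D(4)[OF W x01] DERIV_cmult[OF DERIV_ident]])
    moreover have "(a - \<Psi> x / W x) - a * 1 < 0"
      using Wspec_D(3)[OF W, of x] Psi_pos[of x] x01 by auto
    ultimately show "\<exists>y. DERIV (\<lambda>x. W x - a * x) x :> y \<and> y < 0" by blast
  qed
  then show ?thesis by simp
qed


end

lemma sol_left:
  fixes \<theta> l1 l2 :: "real \<Rightarrow> real" and c :: real
  assumes C2: "C2_on_with {..0} \<theta> l1 l2" and eq: "\<forall>x<0. l2 x + c * l1 x = 0"
    and lt: "(\<theta> \<longlongrightarrow> 0) at_bot" and ll: "(l1 \<longlongrightarrow> 0) at_bot"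
  shows "l1 0 = - c * \<theta> 0"
proof -
  have dth: "(\<theta> has_real_derivative l1 x) (at x within {..0})" and dl: "(l1 has_real_derivative l2 x) (at x within {..0})"
    if "x \<le> 0" for x using C2 that by (auto simp: C2_on_with_def)
  define g where "g = (\<lambda>x. l1 x + c * \<theta> x)"
  have gd: "DERIV g x :> 0" if x: "x < 0" for x
  proof -
    have "DERIV \<theta> x :> l1 x" "DERIV l1 x :> l2 x"
    proof -
      have "at x within {..0} = at x" using x by (intro at_within_interior) simp
      then show "DERIV \<theta> x :> l1 x" "DERIV l1 x :> l2 x" using dth[of x] dl[of x] x by auto
    qed
    then have "DERIV g x :> l2 x + c * l1 x" unfolding g_def by (intro DERIV_add DERIV_cmult)
    then show ?thesis using eq x by simp
  qed
  have gc: "continuous_on {..0} g"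
  proof -
    have "continuous_on {..0} \<theta>" by (rule DERIV_continuous_on[of _ _ l1]) (use dth in simp)
    moreover have "continuous_on {..0} l1" by (rule DERIV_continuous_on[of _ _ l2]) (use dl in simp)
    ultimately have "continuous_on {..0} \<theta>" "continuous_on {..0} l1" by auto
    then show ?thesis unfolding g_def by (intro continuous_intros)
  qed
  have g0: "g x = 0" if x: "x < 0" for x
  proof -
    have const: "g y = g x" if y: "y \<le> x" for y
    proof (cases "y = x")
      case True then show ?thesis by simp
    next
      case False
      then have yx: "y < x" using y by simp
      have c1: "continuous_on {y..x} g" by (rule continuous_on_subset[OF gc]) (use x in auto)
      have d1: "\<And>z. y < z \<Longrightarrow> z < x \<Longrightarrow> DERIV g z :> 0" using gd x by (meson less_trans)
      have "g x = g y"
        by (rule DERIV_isconst2[OF yx c1 d1 less_imp_le[OF yx] order_refl])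
      then show ?thesis by simp
    qed
    have "((\<lambda>x. l1 x + c * \<theta> x) \<longlongrightarrow> 0 + c * 0) at_bot"
      by (rule tendsto_add[OF ll tendsto_mult[OF tendsto_const lt]])
    then have "((\<lambda>x. l1 x + c * \<theta> x) \<longlongrightarrow> 0) at_bot" by (simp only: mult_zero_right add_0)
    then have "(g \<longlongrightarrow> 0) at_bot" unfolding g_def .
    moreover have "eventually (\<lambda>y. g y = g x) at_bot"
      unfolding eventually_at_bot_linorder using const by blast
    ultimately have "((\<lambda>y::real. g x) \<longlongrightarrow> 0) at_bot"
      using Lim_transform_eventually[of g 0 at_bot "\<lambda>y. g x"] by blast
    then show ?thesis by (simp add: tendsto_const_iff)
  qed
  have "(g \<longlongrightarrow> g 0) (at 0 within {..0})" using gc by (simp add: continuous_on_def)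
  then have "(g \<longlongrightarrow> g 0) (at_left 0)"
    by (rule tendsto_within_subset) auto
  moreover have "eventually (\<lambda>y. g y = 0) (at_left (0::real))"
  proof -
    have "\<forall>y. y \<noteq> 0 \<longrightarrow> y \<in> {..<0} \<longrightarrow> g y = 0" using g0 by simp
    then have "eventually (\<lambda>y. y \<noteq> 0 \<longrightarrow> y \<in> {..<0} \<longrightarrow> g y = 0) (nhds (0::real))"
      by (rule always_eventually)
    then show ?thesis by (simp add: eventually_at_filter)
  qed
  ultimately have "((\<lambda>y. 0) \<longlongrightarrow> g 0) (at_left (0::real))"
    by (rule tendsto_cong[THEN iffD1, rotated])
  then have "g 0 = 0" by (simp add: tendsto_const_iff)
  then show ?thesis by (simp add: g_def)
qed


context psi_setup
begin

lemma necessity: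
  fixes \<theta> r1 r2 :: "real \<Rightarrow> real" and \<eta> c :: real and W
  assumes eta: "\<eta> > 0" and c: "c \<le> 0" and W: "Wspec (- \<eta> * c) W"
    and range: "\<forall>x. 0 \<le> \<theta> x \<and> \<theta> x \<le> 1" and cont: "continuous_on UNIV \<theta>"
    and C2: "C2_on_with {0..} \<theta> r1 r2"
    and eqr: "\<forall>x>0. r2 x + \<eta> * c * r1 x = - \<Psi> (\<theta> x)"
    and th0: "\<theta> 0 < 1"
    and lim1: "(\<theta> \<longlongrightarrow> 1) at_top" and limr: "(r1 \<longlongrightarrow> 0) at_top"
  shows "r1 0 = W (\<theta> 0)"
proof -
  define a where "a = - \<eta> * c"
  have a: "a \<ge> 0" using eta c by (simp add: a_def mult_nonneg_nonpos)
  have Wa: "Wspec a W" using W by (simp add: a_def)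
  have dth: "(\<theta> has_real_derivative r1 x) (at x within {0..})" and dr: "(r1 has_real_derivative r2 x) (at x within {0..})"
    if "x \<ge> 0" for x using C2 that by (auto simp: C2_on_with_def)
  have dthi: "DERIV \<theta> x :> r1 x" and dri: "DERIV r1 x :> r2 x" if x: "x > 0" for x
  proof -
    have "at x within {0..} = at x" using x by (intro at_within_interior) simp
    then show "DERIV \<theta> x :> r1 x" "DERIV r1 x :> r2 x" using dth[of x] dr[of x] x by auto
  qed
  have r1c: "continuous_on {0..} r1" by (rule DERIV_continuous_on[of _ _ r2]) (use dr in simp)
  have r2e: "r2 x = a * r1 x - \<Psi> (\<theta> x)" if "x > 0" for x
    using eqr that by (auto simp: a_def algebra_simps)
  have thc: "isCont \<theta> x" for x using cont by (simp add: continuous_on_eq_continuous_at)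
  have thpos: "\<theta> x > 0" if x: "x > 0" for x
  proof (rule ccontr)
    assume "\<not> \<theta> x > 0"
    then have t0: "\<theta> x = 0" using range[rule_format, of x] by simp
    have r10: "r1 x = 0"
      by (rule DERIV_local_min[OF dthi[OF x], of 1]) (use t0 range in auto)
    have "r2 x < 0" using r2e[OF x] t0 r10 Psi_pos[of 0] by simp
    then obtain d where d: "d > 0" and dd: "\<And>h. h > 0 \<Longrightarrow> h < d \<Longrightarrow> r1 x < r1 (x - h)"
      using has_real_derivative_neg_dec_left[OF dri[OF x]] by auto
    define h0 where "h0 = min (d / 2) (x / 2)"
    have h0: "0 < h0" "h0 < d" "h0 < x" using d x by (auto simp: h0_def)
    have "\<theta> (x - h0) < \<theta> x"
    proof (rule DERIV_pos_imp_increasing_open[of "x - h0" x \<theta>])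
      show "x - h0 < x" using h0 by simp
      show "continuous_on {x - h0..x} \<theta>" by (rule continuous_on_subset[OF cont]) auto
      fix y assume y: "x - h0 < y" "y < x"
      then have "r1 x < r1 (x - (x - y))" using dd[of "x - y"] h0 by auto
      then have "r1 y > 0" using r10 by simp
      moreover have "y > 0" using y h0 by simp
      ultimately show "\<exists>z. DERIV \<theta> y :> z \<and> z > 0" using dthi by blast
    qed
    then show False using t0 range[rule_format, of "x - h0"] by simp
  qed
  define f where "f = (\<lambda>x. (r1 x - W (\<theta> x)) * (r1 x - W (\<theta> x)))"
  have key: "f 0 \<le> f x1" if x1: "x1 > 0" and lt1: "\<And>x. 0 < x \<Longrightarrow> x < x1 \<Longrightarrow> \<theta> x < 1" for x1
  proof (rule DERIV_nonneg_imp_increasing_open[of 0 x1 f])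
    show "0 \<le> x1" using x1 by simp
    have "continuous_on {0..x1} (\<lambda>x. W (\<theta> x))"
      by (rule continuous_on_compose2[OF Wspec_D(1)[OF Wa] continuous_on_subset[OF cont]]) (use range in auto)
    then show "continuous_on {0..x1} f" unfolding f_def
      by (intro continuous_intros continuous_on_subset[OF r1c]) auto
    fix x assume x: "0 < x" "x < x1"
    define t where "t = \<theta> x"
    have t01: "t \<in> {0<..<1}" using thpos[of x] lt1[of x] x by (auto simp: t_def)
    have Wt: "W t > 0" using Wspec_D(3)[OF Wa, of t] t01 by auto
    have dW: "DERIV (\<lambda>x. W (\<theta> x)) x :> (a - \<Psi> t / W t) * r1 x"
      unfolding t_def by (rule DERIV_chain2[OF Wspec_D(4)[OF Wa] dthi]) (use t01 x in \<open>auto simp: t_def\<close>)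
    have dphi: "DERIV (\<lambda>x. r1 x - W (\<theta> x)) x :> r2 x - (a - \<Psi> t / W t) * r1 x"
      by (rule DERIV_diff[OF dri dW]) (use x in simp)
    have df: "DERIV f x :> (r2 x - (a - \<Psi> t / W t) * r1 x) * (r1 x - W (\<theta> x)) +
                           (r2 x - (a - \<Psi> t / W t) * r1 x) * (r1 x - W (\<theta> x))"
      unfolding f_def by (rule DERIV_mult[OF dphi dphi])
    have e: "r2 x - (a - \<Psi> t / W t) * r1 x = (\<Psi> t / W t) * (r1 x - W t)"
    proof -
      have r2x: "r2 x = a * r1 x - \<Psi> t" using r2e[of x] x by (simp add: t_def)
      show ?thesis using Wt unfolding r2x by (simp add: field_simps)
    qed
    have "(r2 x - (a - \<Psi> t / W t) * r1 x) * (r1 x - W (\<theta> x)) +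
          (r2 x - (a - \<Psi> t / W t) * r1 x) * (r1 x - W (\<theta> x))
          = 2 * (\<Psi> t / W t) * ((r1 x - W t) * (r1 x - W t))"
    proof -
      have gen: "\<And>k u :: real. (k * u) * u + (k * u) * u = 2 * k * (u * u)" by (simp add: algebra_simps)
      show ?thesis unfolding e t_def[symmetric] by (rule gen)
    qed
    moreover have "2 * (\<Psi> t / W t) * ((r1 x - W t) * (r1 x - W t)) \<ge> 0"
    proof -
      have h1: "0 \<le> \<Psi> t / W t" using Psi_nn[of t] t01 Wt by auto
      have h2: "0 \<le> (r1 x - W t) * (r1 x - W t)" by (rule zero_le_square)
      show ?thesis by (rule mult_nonneg_nonneg[OF mult_nonneg_nonneg[OF _ h1] h2]) simp
    qed
    ultimately show "\<exists>y. DERIV f x :> y \<and> y \<ge> 0" using df by auto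
  qed
  have "f 0 \<le> 0"
  proof (cases "\<exists>x1>0. \<theta> x1 = 1")
    case True
    then obtain x1 where x1: "x1 > 0" "\<theta> x1 = 1" by auto
    define K where "K = {0..x1} \<inter> \<theta> -` {1}"
    have "closed K" unfolding K_def
      by (intro continuous_closed_preimage continuous_on_subset[OF cont]) auto
    moreover have "bounded K" unfolding K_def by (rule bounded_subset[of "{0..x1}"]) auto
    ultimately have "compact K" by (simp add: compact_eq_bounded_closed)
    moreover have "x1 \<in> K" using x1 by (auto simp: K_def)
    then have "K \<noteq> {}" by auto
    ultimately obtain z where zK: "z \<in> K" and zmin: "\<And>y. y \<in> K \<Longrightarrow> z \<le> y"
      using compact_attains_inf[of K] by auto
    have z: "0 \<le> z" "z \<le> x1" "\<theta> z = 1" using zK by (auto simp: K_def)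
    have zpos: "z > 0" using z th0 by (cases "z = 0") auto
    have lt1: "\<theta> x < 1" if "0 < x" "x < z" for x
    proof (rule ccontr)
      assume "\<not> \<theta> x < 1"
      then have "\<theta> x = 1" using range[rule_format, of x] by simp
      then have "x \<in> K" using that z by (auto simp: K_def)
      then show False using zmin[of x] that by simp
    qed
    have "f 0 \<le> f z" by (rule key[OF zpos lt1])
    moreover have "r1 z = 0"
      by (rule DERIV_local_max[OF dthi[OF zpos], of 1]) (use z range in auto)
    moreover have "W (\<theta> z) = 0" using z Wspec_D(2)[OF Wa] by simp
    ultimately show ?thesis by (simp add: f_def)
  next
    case False
    then have lt1: "\<theta> x < 1" if "x > 0" for x using range[rule_format, of x] that by (auto simp: less_le)
    have "((\<lambda>x. W (\<theta> x)) \<longlongrightarrow> W 1) at_top"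
      by (rule continuous_on_tendsto_compose[OF Wspec_D(1)[OF Wa] lim1]) (use range in auto)
    then have "((\<lambda>x. W (\<theta> x)) \<longlongrightarrow> 0) at_top" using Wspec_D(2)[OF Wa] by simp
    then have "(f \<longlongrightarrow> (0 - 0) * (0 - 0)) at_top" unfolding f_def
      by (intro tendsto_mult tendsto_diff limr)
    then have fl: "(f \<longlongrightarrow> 0) at_top" by simp
    show ?thesis
    proof (rule tendsto_lowerbound[OF fl])
      show "eventually (\<lambda>x. f 0 \<le> f x) at_top"
        unfolding eventually_at_top_linorder using key lt1 by (meson less_trans zero_less_one order.strict_trans2 linorder_not_le)
      show "(at_top :: real filter) \<noteq> bot" by simp
    qed
  qed
  then have "(r1 0 - W (\<theta> 0)) * (r1 0 - W (\<theta> 0)) \<le> 0" by (simp add: f_def)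
  then have "(r1 0 - W (\<theta> 0)) * (r1 0 - W (\<theta> 0)) = 0"
    using zero_le_square[of "r1 0 - W (\<theta> 0)"] by linarith
  then have "r1 0 - W (\<theta> 0) = 0" by simp
  then show ?thesis by simp
qed


lemma inv_construct:
  assumes a: "a \<ge> 0" and Wa: "Wspec a W" and t0: "0 < t0" "t0 < 1"
  shows "\<exists>g xl. xl < 0 \<and> g 0 = t0 \<and> (\<forall>x>xl. DERIV g x :> W (g x)) \<and>
           (\<forall>x\<ge>0. t0 \<le> g x \<and> g x < 1) \<and> (g \<longlongrightarrow> 1) at_top"
proof -
  have Wp: "W t > 0" if "t \<in> {0..<1}" for t using Wspec_D(3)[OF Wa] that by auto
  have invc: "continuous_on {0..b} (\<lambda>s. 1 / W s)" if "b < 1" for b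
  proof -
    have nz: "W s \<noteq> 0" if "s \<in> {0..b}" for s
    proof -
      have "s \<in> {0..<1}" using that \<open>b < 1\<close> by auto
      then show ?thesis using Wp[of s] by auto
    qed
    show ?thesis using nz \<open>b < 1\<close> by (intro continuous_intros continuous_on_subset[OF Wspec_D(1)[OF Wa]]) auto
  qed
  define X where "X t = integral {0..t} (\<lambda>s. 1 / W s) - integral {0..t0} (\<lambda>s. 1 / W s)" for t
  have XD: "DERIV X t :> 1 / W t" if t: "t \<in> {0<..<1}" for t
  proof -
    define b where "b = (t + 1) / 2"
    have b: "t < b" "b < 1" using t by (auto simp: b_def)
    have "((\<lambda>u. integral {0..u} (\<lambda>s. 1 / W s)) has_real_derivative 1 / W t) (at t within {0..b})"
      using integral_has_vector_derivative[OF invc[OF b(2)], of t] t b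
      by (simp add: has_real_derivative_iff_has_vector_derivative)
    moreover have "at t within {0..b} = at t" using t b by (intro at_within_interior) auto
    ultimately have "((\<lambda>u. integral {0..u} (\<lambda>s. 1 / W s)) has_real_derivative 1 / W t) (at t)" by simp
    then have "((\<lambda>u. integral {0..u} (\<lambda>s. 1 / W s) - integral {0..t0} (\<lambda>s. 1 / W s)) has_real_derivative 1 / W t - 0) (at t)"
      by (intro DERIV_diff DERIV_const)
    then show ?thesis by (simp add: X_def[abs_def])
  qed
  have Xc: "isCont X t" if "t \<in> {0<..<1}" for t using XD[OF that] by (rule DERIV_isCont)
  have Xco: "continuous_on {s..t} X" if "0 < s" "t < 1" for s t
    using Xc that by (intro continuous_at_imp_continuous_on) auto
  have Xmono: "X s < X t" if "0 < s" "s < t" "t < 1" for s t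
  proof (rule DERIV_pos_imp_increasing[OF that(2)])
    fix x assume "s \<le> x" "x \<le> t"
    then have x: "x \<in> {0<..<1}" using that by auto
    then show "\<exists>y. DERIV X x :> y \<and> y > 0" using XD[OF x] Wp[of x] by auto
  qed
  have Xt0: "X t0 = 0" by (simp add: X_def)
  define K where "K = sqrt \<Lambda>"
  have K: "K > 0" using Lam_pos by (simp add: K_def)
  have Xlow: "X t \<ge> (ln (1 - t0) - ln (1 - t)) / K" if t: "t0 \<le> t" "t < 1" for t
  proof -
    have "(\<lambda>s. X s + ln (1 - s) / K) t0 \<le> (\<lambda>s. X s + ln (1 - s) / K) t"
    proof (rule DERIV_nonneg_imp_increasing_open[of t0 t "\<lambda>s. X s + ln (1 - s) / K"])
      show "t0 \<le> t" using t by simp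
      have "continuous_on {t0..t} X" using Xco[of t0 t] t t0 by simp
      moreover have "continuous_on {t0..t} (\<lambda>s. ln (1 - s) / K)"
        using t K by (intro continuous_intros) auto
      ultimately show "continuous_on {t0..t} (\<lambda>s. X s + ln (1 - s) / K)" by (rule continuous_on_add)
      fix s assume s: "t0 < s" "s < t"
      then have s01: "s \<in> {0<..<1}" using t t0 by auto
      have d1: "DERIV (\<lambda>s. ln (1 - s)) s :> inverse (1 - s) * (0 - 1)"
        by (rule DERIV_chain2[OF DERIV_ln DERIV_diff[OF DERIV_const DERIV_ident]]) (use s01 in auto)
      have "DERIV (\<lambda>s. X s + ln (1 - s) / K) s :> 1 / W s + inverse (1 - s) * (0 - 1) / K"
        by (rule DERIV_add[OF XD[OF s01] DERIV_cdivide[OF d1]])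
      moreover have "1 / W s + inverse (1 - s) * (0 - 1) / K \<ge> 0"
      proof -
        have Ws: "W s > 0" using Wp[of s] s01 by auto
        have "W s \<le> K * (1 - s)" using W_bound[OF a Wa, of s] s01 by (auto simp: K_def)
        then have "1 / (K * (1 - s)) \<le> 1 / W s" using Ws by (intro divide_left_mono) auto
        moreover have "inverse (1 - s) * (0 - 1) / K = - (1 / (K * (1 - s)))"
          by (simp add: field_simps)
        ultimately show ?thesis by simp
      qed
      ultimately show "\<exists>y. DERIV (\<lambda>s. X s + ln (1 - s) / K) s :> y \<and> y \<ge> 0" by blast
    qed
    then have "ln (1 - t0) / K \<le> X t + ln (1 - t) / K" using Xt0 by simp
    moreover have "(ln (1 - t0) - ln (1 - t)) / K = ln (1 - t0) / K - ln (1 - t) / K"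
      by (simp add: diff_divide_distrib)
    ultimately show ?thesis by linarith
  qed
  have Xunb: "\<exists>t. t0 \<le> t \<and> t < 1 \<and> X t > M" for M
  proof -
    define E where "E = exp (- (K * \<bar>M\<bar> + 1))"
    define t where "t = 1 - (1 - t0) * E"
    have "K * \<bar>M\<bar> \<ge> 0" using K by simp
    then have E: "E < 1" "E > 0" by (auto simp: E_def)
    have "(1 - t0) * E < (1 - t0) * 1" using t0 E by (intro mult_strict_left_mono) auto
    moreover have "(1 - t0) * E > 0" using t0 E by simp
    ultimately have tt: "t0 < t" "t < 1" by (auto simp: t_def)
    have "ln (1 - t) = ln ((1 - t0) * E)" by (simp add: t_def)
    also have "\<dots> = ln (1 - t0) + ln E" using t0 E by (simp add: ln_mult)
    also have "\<dots> = ln (1 - t0) - (K * \<bar>M\<bar> + 1)" by (simp add: E_def)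
    finally have "ln (1 - t) = ln (1 - t0) - (K * \<bar>M\<bar> + 1)" .
    then have "(ln (1 - t0) - ln (1 - t)) / K = \<bar>M\<bar> + 1 / K" using K by (simp add: field_simps)
    moreover have "\<bar>M\<bar> + 1 / K > M"
    proof -
      have "1 / K > 0" using K by simp
      moreover have "M \<le> \<bar>M\<bar>" by simp
      ultimately show ?thesis by linarith
    qed
    ultimately have "X t > M" using Xlow[of t] tt by simp
    then show ?thesis using tt by (intro exI[of _ t]) auto
  qed
  define xl where "xl = X (t0 / 2)"
  have xl: "xl < 0" using Xmono[of "t0/2" t0] t0 Xt0 by (simp add: xl_def)
  define g where "g x = (THE t. t \<in> {0<..<1} \<and> X t = x)" for x
  have gX: "g (X z) = z" if z: "z \<in> {0<..<1}" for z
    unfolding g_def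
  proof (rule the_equality)
    show "z \<in> {0<..<1} \<and> X z = X z" using z by simp
    fix t assume t: "t \<in> {0<..<1} \<and> X t = X z"
    show "t = z"
    proof (rule ccontr)
      assume "t \<noteq> z"
      then have "t < z \<or> z < t" by auto
      then show False using Xmono[of t z] Xmono[of z t] t z by auto
    qed
  qed
  have gprop: "t0 / 2 \<le> g x \<and> g x < 1 \<and> X (g x) = x" if x: "x \<ge> xl" for x
  proof -
    obtain t' where t': "t0 \<le> t'" "t' < 1" "X t' > x" using Xunb[of x] by auto
    have "\<exists>t. t0 / 2 \<le> t \<and> t \<le> t' \<and> X t = x"
      by (rule IVT') (use x t' t0 Xco[of "t0/2" t'] in \<open>auto simp: xl_def\<close>)
    then obtain t where t: "t0 / 2 \<le> t" "t \<le> t'" "X t = x" by auto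
    have "g x = t" using gX[of t] t t' t0 by auto
    then show ?thesis using t t' by auto
  qed
  have g0: "g 0 = t0" using gX[of t0] t0 Xt0 by auto
  have gge: "g x \<ge> t0" if "x \<ge> 0" for x
  proof (rule ccontr)
    assume "\<not> g x \<ge> t0"
    then have "X (g x) < X t0" using gprop[of x] that xl t0 by (intro Xmono) auto
    then show False using gprop[of x] that xl Xt0 by auto
  qed
  have ggt: "g x > t0 / 2" if "x > xl" for x
  proof -
    have "g x \<noteq> t0 / 2" using gprop[of x] that by (auto simp: xl_def)
    then show ?thesis using gprop[of x] that by auto
  qed
  have gD: "DERIV g x :> W (g x)" if x: "x > xl" for x
  proof -
    define u where "u = g x"
    have u: "t0 / 2 < u" "u < 1" "X u = x" using ggt[OF x] gprop[of x] x by (auto simp: u_def)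
    define b where "b = (u + 1) / 2"
    have b: "u < b" "b < 1" using u by (auto simp: b_def)
    have cont: "isCont g x"
    proof -
      have "isCont g (X u)"
        by (rule isCont_inverse_function2[where a="t0/2" and x=u and b=b and f=X and g=g]) (use u b t0 gX Xc in auto)
      then show ?thesis using u by simp
    qed
    have Wu: "W u > 0" using Wp[of u] u t0 by auto
    have "DERIV g x :> inverse (1 / W u)"
    proof (rule DERIV_inverse_function[where f=X and g=g and x=x and D="1 / W u" and a=xl and b="X b"])
      show "DERIV X (g x) :> 1 / W u" using XD[of u] u t0 by (auto simp: u_def)
      show "1 / W u \<noteq> 0" using Wu by simp
      show "xl < x" using x .
      show "x < X b" using Xmono[of u b] u b t0 by auto
      fix y assume "xl < y" "y < X b"
      then show "X (g y) = y" using gprop[of y] by auto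
    next
      show "isCont g x" using cont .
    qed
    then show ?thesis using Wu by (simp add: u_def)
  qed
  have glim: "(g \<longlongrightarrow> 1) at_top"
  proof (rule order_tendstoI)
    fix y :: real assume y: "y < 1"
    define t' where "t' = max y t0"
    have t': "0 < t'" "t' < 1" "y \<le> t'" using y t0 by (auto simp: t'_def)
    have "g x > y" if "x > X t'" "x \<ge> 0" for x
    proof (rule ccontr)
      assume "\<not> g x > y"
      then have "g x \<le> t'" using t' by simp
      then have "X (g x) \<le> X t'"
        using Xmono[of "g x" t'] gprop[of x] gge[of x] that t0 xl t' by (cases "g x = t'") auto
      then show False using gprop[of x] that xl by auto
    qed
    then show "eventually (\<lambda>x. y < g x) at_top"
      unfolding eventually_at_top_linorder by (intro exI[of _ "max (X t') 0 + 1"]) auto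
  next
    fix y :: real assume y: "y > 1"
    have "g x < y" if "x \<ge> 0" for x using gprop[of x] that xl y by auto
    then show "eventually (\<lambda>x. g x < y) at_top"
      unfolding eventually_at_top_linorder by blast
  qed
  show ?thesis
    using xl g0 gD gge gprop glim by (intro exI[of _ g] exI[of _ xl]) (auto dest: less_imp_le)
qed


lemma construct:
  fixes \<eta> c t0 q :: real and W
  assumes eta: "\<eta> > 0" and c: "c < 0" and W: "Wspec (- \<eta> * c) W"
    and t0: "0 < t0" "t0 < 1" and eq: "W t0 = (- \<eta> * c) * (t0 - q)"
  shows "\<exists>\<theta>. (\<forall>x. 0 \<le> \<theta> x \<and> \<theta> x \<le> 1) \<and> continuous_on UNIV \<theta> \<and>
     (\<exists>l1 l2 r1 r2. C2_on_with {..0} \<theta> l1 l2 \<and> C2_on_with {0..} \<theta> r1 r2 \<and>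
        (\<forall>x<0. l2 x + c * l1 x = 0) \<and> (\<forall>x>0. r2 x + \<eta> * c * r1 x = - \<Psi> (\<theta> x)) \<and>
        (\<theta> \<longlongrightarrow> 0) at_bot \<and> \<theta> 0 = t0 \<and> (\<theta> \<longlongrightarrow> 1) at_top \<and> (l1 \<longlongrightarrow> 0) at_bot \<and>
        (r1 \<longlongrightarrow> 0) at_top \<and> r1 0 - \<eta> * l1 0 = \<eta> * q * c)"
proof -
  define a where "a = - \<eta> * c"
  have a: "a > 0" using eta c by (simp add: a_def mult_pos_neg)
  have Wa: "Wspec a W" using W by (simp add: a_def)
  obtain g xl where xl: "xl < 0" and g0: "g 0 = t0" and gD: "\<And>x. x > xl \<Longrightarrow> DERIV g x :> W (g x)"
    and grange: "\<And>x. x \<ge> 0 \<Longrightarrow> t0 \<le> g x \<and> g x < 1" and glim: "(g \<longlongrightarrow> 1) at_top"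
    using inv_construct[OF less_imp_le[OF a] Wa t0] by blast
  define \<theta> where "\<theta> = (\<lambda>x. if x \<le> 0 then t0 * exp (- c * x) else g x)"
  define l1 where "l1 = (\<lambda>x. - c * t0 * exp (- c * x))"
  define l2 where "l2 = (\<lambda>x. c * c * t0 * exp (- c * x))"
  define r1 where "r1 = (\<lambda>x. W (g x))"
  define r2 where "r2 = (\<lambda>x. a * W (g x) - \<Psi> (g x))"
  have thl: "\<theta> x = t0 * exp (- c * x)" if "x \<le> 0" for x using that by (simp add: \<theta>_def)
  have thr: "\<theta> x = g x" if "x \<ge> 0" for x using that g0 by (cases "x = 0") (auto simp: \<theta>_def)
  have gin: "g x \<in> {0<..<1}" if "x \<ge> 0" for x using grange[OF that] t0 by auto
  have dexp: "DERIV (\<lambda>x. t0 * exp (- c * x)) x :> l1 x" for x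
  proof -
    have "DERIV (\<lambda>x. t0 * exp (- c * x)) x :> t0 * (exp (- c * x) * (- c * 1))"
      by (rule DERIV_cmult[OF DERIV_chain2[OF DERIV_exp DERIV_cmult[OF DERIV_ident]]])
    then show ?thesis by (simp add: l1_def algebra_simps)
  qed
  have dl1: "DERIV l1 x :> l2 x" for x
  proof -
    have "DERIV l1 x :> - c * t0 * (exp (- c * x) * (- c * 1))"
      unfolding l1_def by (rule DERIV_cmult[OF DERIV_chain2[OF DERIV_exp DERIV_cmult[OF DERIV_ident]]])
    then show ?thesis by (simp add: l2_def algebra_simps)
  qed
  have C2l: "C2_on_with {..0} \<theta> l1 l2"
    unfolding C2_on_with_def
  proof (intro conjI ballI)
    fix x :: real assume x: "x \<in> {..0}"
    show "(\<theta> has_real_derivative l1 x) (at x within {..0})"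
      by (rule has_field_derivative_transform_within[OF has_field_derivative_at_within[OF dexp] zero_less_one x])
         (simp add: thl)
    show "(l1 has_real_derivative l2 x) (at x within {..0})"
      by (rule has_field_derivative_at_within[OF dl1])
  next
    show "continuous_on {..0} l2" unfolding l2_def by (intro continuous_intros)
  qed
  have dr1: "DERIV r1 x :> r2 x" if x: "x \<ge> 0" for x
  proof -
    have "DERIV r1 x :> (a - \<Psi> (g x) / W (g x)) * W (g x)"
      unfolding r1_def by (rule DERIV_chain2[OF Wspec_D(4)[OF Wa gin[OF x]] gD]) (use x xl in simp)
    moreover have "W (g x) > 0" using Wspec_D(3)[OF Wa, of "g x"] gin[OF x] by auto
    then have "(a - \<Psi> (g x) / W (g x)) * W (g x) = r2 x" by (simp add: r2_def algebra_simps)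
    ultimately show ?thesis by simp
  qed
  have r2c: "continuous_on {0..} r2"
  proof (intro continuous_at_imp_continuous_on ballI)
    fix x :: real assume "x \<in> {0..}"
    then have x: "x \<ge> 0" by simp
    have gc: "isCont g x" using gD[of x] x xl by (intro DERIV_isCont) auto
    have Wc: "isCont W (g x)" using Wspec_D(4)[OF Wa gin[OF x]] by (rule DERIV_isCont)
    have Pc: "isCont \<Psi> (g x)"
      using continuous_on_interior[OF Psi_cont, of "g x"] gin[OF x] by simp
    show "isCont r2 x" unfolding r2_def
      by (intro continuous_intros isCont_o2[OF gc Wc] isCont_o2[OF gc Pc])
  qed
  have C2r: "C2_on_with {0..} \<theta> r1 r2"
    unfolding C2_on_with_def
  proof (intro conjI ballI r2c)
    fix x :: real assume x: "x \<in> {0..}"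
    have "DERIV g x :> r1 x" using gD[of x] x xl by (simp add: r1_def)
    then show "(\<theta> has_real_derivative r1 x) (at x within {0..})"
      by (rule has_field_derivative_transform_within[OF has_field_derivative_at_within zero_less_one x])
         (simp add: thr)
    show "(r1 has_real_derivative r2 x) (at x within {0..})"
      using dr1[of x] x by (simp add: has_field_derivative_at_within)
  qed
  have range: "\<forall>x. 0 \<le> \<theta> x \<and> \<theta> x \<le> 1"
  proof
    fix x :: real
    show "0 \<le> \<theta> x \<and> \<theta> x \<le> 1"
    proof (cases "x \<le> 0")
      case True
      have "c * x \<ge> 0" using True c by (simp add: mult_nonpos_nonpos)
      then have "- c * x \<le> 0" by simp
      then have "exp (- c * x) \<le> 1" by simp
      then have "t0 * exp (- c * x) \<le> t0 * 1" using t0 by (intro mult_left_mono) auto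
      then have h1: "t0 * exp (- c * x) \<le> 1" using t0 by linarith
      have h0: "0 \<le> t0 * exp (- c * x)" using t0 by simp
      show ?thesis using h0 h1 thl[OF True] by simp
    next
      case False
      then show ?thesis using grange[of x] t0 thr[of x] by auto
    qed
  qed
  have cont: "continuous_on UNIV \<theta>"
  proof -
    have "continuous_on {..0} \<theta>"
      by (rule DERIV_continuous_on[of _ _ l1]) (use C2l in \<open>simp add: C2_on_with_def\<close>)
    moreover have "continuous_on {0..} \<theta>"
      by (rule DERIV_continuous_on[of _ _ r1]) (use C2r in \<open>simp add: C2_on_with_def\<close>)
    ultimately have "continuous_on ({..0} \<union> {0..}) \<theta>" by (intro continuous_on_closed_Un) auto
    moreover have "{..0} \<union> {0..} = (UNIV :: real set)" by auto
    ultimately show ?thesis by simp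
  qed
  have eql: "\<forall>x<0. l2 x + c * l1 x = 0" by (simp add: l1_def l2_def algebra_simps)
  have eqr: "\<forall>x>0. r2 x + \<eta> * c * r1 x = - \<Psi> (\<theta> x)"
    by (auto simp: r1_def r2_def a_def thr algebra_simps)
  have expbot: "((\<lambda>x. exp (- c * x)) \<longlongrightarrow> 0) at_bot"
  proof -
    have "filterlim (\<lambda>x::real. (- c) * x) at_bot at_bot"
      by (rule filterlim_tendsto_pos_mult_at_bot[OF tendsto_const _ filterlim_ident]) (use c in simp)
    then show ?thesis by (rule filterlim_compose[OF exp_at_bot])
  qed
  have thbot: "(\<theta> \<longlongrightarrow> 0) at_bot"
  proof -
    have "((\<lambda>x. t0 * exp (- c * x)) \<longlongrightarrow> t0 * 0) at_bot" by (intro tendsto_intros expbot)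
    then have "((\<lambda>x. t0 * exp (- c * x)) \<longlongrightarrow> 0) at_bot" by simp
    moreover have "eventually (\<lambda>x. t0 * exp (- c * x) = \<theta> x) at_bot"
      unfolding eventually_at_bot_linorder by (intro exI[of _ 0]) (simp add: thl)
    ultimately show ?thesis by (rule Lim_transform_eventually)
  qed
  have l1bot: "(l1 \<longlongrightarrow> 0) at_bot"
  proof -
    have "((\<lambda>x. - c * t0 * exp (- c * x)) \<longlongrightarrow> - c * t0 * 0) at_bot" by (intro tendsto_intros expbot)
    then show ?thesis by (simp add: l1_def)
  qed
  have thtop: "(\<theta> \<longlongrightarrow> 1) at_top"
  proof -
    have "eventually (\<lambda>x. g x = \<theta> x) at_top"
      unfolding eventually_at_top_linorder by (intro exI[of _ 0]) (simp add: thr)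
    then show ?thesis using glim by (rule Lim_transform_eventually[rotated])
  qed
  have r1top: "(r1 \<longlongrightarrow> 0) at_top"
  proof -
    have "((\<lambda>x. W (g x)) \<longlongrightarrow> W 1) at_top"
    proof (rule continuous_on_tendsto_compose[OF Wspec_D(1)[OF Wa] glim])
      show "(1::real) \<in> {0..1}" by simp
      show "eventually (\<lambda>x. g x \<in> {0..1}) at_top"
        unfolding eventually_at_top_linorder using gin by (intro exI[of _ 0]) (auto intro: less_imp_le)
    qed
    then show ?thesis using Wspec_D(2)[OF Wa] by (simp add: r1_def)
  qed
  have th0: "\<theta> 0 = t0" by (simp add: thl)
  have iface: "r1 0 - \<eta> * l1 0 = \<eta> * q * c"
    using eq g0 by (simp add: r1_def l1_def a_def algebra_simps)
  show ?thesis
    using range cont C2l C2r eql eqr thbot th0 thtop l1bot r1top iface by blast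
qed

end


lemma smooth_lip:
  fixes \<Psi> :: "real \<Rightarrow> real"
  assumes sm: "smooth_on {0..1} \<Psi>"
  shows "\<exists>\<Lambda>>0. continuous_on {0..1} \<Psi> \<and>
           (\<forall>x\<in>{0..1}. \<forall>y\<in>{0..1}. \<bar>\<Psi> x - \<Psi> y\<bar> \<le> \<Lambda> * \<bar>x - y\<bar>)"
proof -
  obtain D where D0: "\<forall>x\<in>{0..1}. D 0 x = \<Psi> x"
    and DS: "\<forall>n. \<forall>x\<in>{0..1}. (D n has_real_derivative D (Suc n) x) (at x within {0..1})"
    using sm unfolding smooth_on_def by blast
  have dP: "(\<Psi> has_real_derivative D 1 x) (at x within {0..1})" if x: "x \<in> {0..1}" for x
  proof -
    have "(D 0 has_real_derivative D (Suc 0) x) (at x within {0..1})" using DS x by blast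
    then have "(D 0 has_real_derivative D 1 x) (at x within {0..1})" by simp
    then show ?thesis by (rule has_field_derivative_transform_within[OF _ zero_less_one x]) (use D0 in auto)
  qed
  have Pc: "continuous_on {0..1} \<Psi>" by (rule DERIV_continuous_on[of _ _ "D 1"]) (use dP in auto)
  have D1c: "continuous_on {0..1} (D 1)"
  proof (rule DERIV_continuous_on[of _ _ "D (Suc 1)"])
    fix x :: real assume "x \<in> {0..1}"
    then show "(D 1 has_real_derivative D (Suc 1) x) (at x within {0..1})" using DS by blast
  qed
  have "bounded (D 1 ` {0..1})" by (intro compact_imp_bounded compact_continuous_image D1c) auto
  then obtain B where B: "B > 0" and Bb: "\<And>x. x \<in> {0..1} \<Longrightarrow> \<bar>D 1 x\<bar> \<le> B"
    unfolding bounded_pos by auto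
  have dPi: "DERIV \<Psi> x :> D 1 x" if "x \<in> {0<..<1}" for x
  proof -
    have "at x within {0..1} = at x" using that by (intro at_within_interior) auto
    then show ?thesis using dP[of x] that by auto
  qed
  have lip1: "\<Psi> y - \<Psi> x \<le> B * (y - x) \<and> \<Psi> x - \<Psi> y \<le> B * (y - x)"
    if xy: "x \<in> {0..1}" "y \<in> {0..1}" "x \<le> y" for x y
  proof
    have "(\<lambda>t. B * t - \<Psi> t) x \<le> (\<lambda>t. B * t - \<Psi> t) y"
    proof (rule DERIV_nonneg_imp_increasing_open[of x y "\<lambda>t. B * t - \<Psi> t"])
      show "x \<le> y" using xy by simp
      show "continuous_on {x..y} (\<lambda>t. B * t - \<Psi> t)"
        by (intro continuous_intros continuous_on_subset[OF Pc]) (use xy in auto)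
      fix t assume t: "x < t" "t < y"
      then have t01: "t \<in> {0<..<1}" using xy by auto
      have "DERIV (\<lambda>t. B * t - \<Psi> t) t :> B * 1 - D 1 t"
        by (rule DERIV_diff[OF DERIV_cmult[OF DERIV_ident] dPi[OF t01]])
      moreover have "B * 1 - D 1 t \<ge> 0" using Bb[of t] t01 by auto
      ultimately show "\<exists>z. DERIV (\<lambda>t. B * t - \<Psi> t) t :> z \<and> z \<ge> 0" by blast
    qed
    then show "\<Psi> y - \<Psi> x \<le> B * (y - x)" by (simp add: algebra_simps)
    have "(\<lambda>t. B * t + \<Psi> t) x \<le> (\<lambda>t. B * t + \<Psi> t) y"
    proof (rule DERIV_nonneg_imp_increasing_open[of x y "\<lambda>t. B * t + \<Psi> t"])
      show "x \<le> y" using xy by simp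
      show "continuous_on {x..y} (\<lambda>t. B * t + \<Psi> t)"
        by (intro continuous_intros continuous_on_subset[OF Pc]) (use xy in auto)
      fix t assume t: "x < t" "t < y"
      then have t01: "t \<in> {0<..<1}" using xy by auto
      have "DERIV (\<lambda>t. B * t + \<Psi> t) t :> B * 1 + D 1 t"
        by (rule DERIV_add[OF DERIV_cmult[OF DERIV_ident] dPi[OF t01]])
      moreover have "B * 1 + D 1 t \<ge> 0" using Bb[of t] t01 by auto
      ultimately show "\<exists>z. DERIV (\<lambda>t. B * t + \<Psi> t) t :> z \<and> z \<ge> 0" by blast
    qed
    then show "\<Psi> x - \<Psi> y \<le> B * (y - x)" by (simp add: algebra_simps)
  qed
  have "\<forall>x\<in>{0..1}. \<forall>y\<in>{0..1}. \<bar>\<Psi> x - \<Psi> y\<bar> \<le> B * \<bar>x - y\<bar>"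
  proof (intro ballI)
    fix x y :: real assume x: "x \<in> {0..1}" and y: "y \<in> {0..1}"
    show "\<bar>\<Psi> x - \<Psi> y\<bar> \<le> B * \<bar>x - y\<bar>"
    proof (cases "x \<le> y")
      case True then show ?thesis using lip1[OF x y True] by (simp add: abs_le_iff abs_of_nonneg)
    next
      case False then show ?thesis using lip1[OF y x] by (simp add: abs_le_iff abs_of_nonneg abs_minus_commute)
    qed
  qed
  then show ?thesis using B Pc by blast
qed


lemma (in psi_setup) W_absdiff:
  assumes Wa: "Wspec a Wa" and Wb: "Wspec b Wb" and t: "t \<in> {0..1}"
  shows "\<bar>Wa t - Wb t\<bar> \<le> \<bar>b - a\<bar>"
proof (cases "a \<le> b")
  case True
  have "Wa t - Wb t \<le> (b - a) * (1 - t)" by (rule W_lip[OF Wa Wb True t])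
  also have "\<dots> \<le> (b - a) * 1" using True t by (intro mult_left_mono) auto
  finally show ?thesis using W_mono[OF Wa Wb True t] True by simp
next
  case False
  then have ba: "b \<le> a" by simp
  have "Wb t - Wa t \<le> (a - b) * (1 - t)" by (rule W_lip[OF Wb Wa ba t])
  also have "\<dots> \<le> (a - b) * 1" using ba t by (intro mult_left_mono) auto
  finally show ?thesis using W_mono[OF Wb Wa ba t] ba by simp
qed

theorem proposition7:
  fixes \<eta> Qg Qp cmax :: real and \<Psi> \<theta>s :: "real \<Rightarrow> real"
  assumes eta_pos: "\<eta> > 0"
    and Qg_pos: "Qg > 0"
    and Qp_range: "- Qg < Qp" "Qp < 0"
    and Psi_smooth: "smooth_on {0..1} \<Psi>"
    and Psi_pos: "\<forall>t. 0 \<le> t \<and> t < 1 \<longrightarrow> \<Psi> t > 0"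
    and Psi_one: "\<Psi> 1 = 0"
    and cmax_neg: "cmax < 0"
    and ths_cont: "continuous_on {cmax..0} \<theta>s"
    and ths_decr: "\<forall>a b. cmax \<le> a \<and> a < b \<and> b \<le> 0 \<longrightarrow> \<theta>s b < \<theta>s a"
    and ths_zero: "\<theta>s 0 = 0"
    and ths_cmax: "\<theta>s cmax = 1"
    and ths_range: "\<forall>c\<in>{cmax..0}. 0 \<le> \<theta>s c \<and> \<theta>s c \<le> 1"
    and ths_smooth: "smooth_on {cmax..<0} \<theta>s"
    and ths_deriv_neg: "\<forall>c\<in>{cmax..<0}. \<exists>d<0. (\<theta>s has_real_derivative d) (at c within {cmax..<0})"
  shows "\<exists>!c. c \<in> {cmax..0} \<and> (\<exists>\<theta>. solves_Pc \<eta> Qg Qp \<Psi> \<theta>s c \<theta>)"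
proof -
  obtain \<Lambda> where Lam: "\<Lambda> > 0" and Pc: "continuous_on {0..1} \<Psi>"
    and Plip: "\<forall>x\<in>{0..1}. \<forall>y\<in>{0..1}. \<bar>\<Psi> x - \<Psi> y\<bar> \<le> \<Lambda> * \<bar>x - y\<bar>"
    using smooth_lip[OF Psi_smooth] by blast
  interpret P: psi_setup \<Psi> \<Lambda>
    by unfold_locales (use Lam Pc Plip Psi_pos Psi_one in auto)
  define q where "q = Qp / (Qp + Qg)"
  have q: "q < 0" using Qp_range Qg_pos by (simp add: q_def divide_neg_pos)
  define A where "A c = - \<eta> * c" for c
  define Wf where "Wf a = (SOME W. P.Wspec a W)" for a
  have Wf: "P.Wspec a (Wf a)" if "a \<ge> 0" for a
    unfolding Wf_def using P.W_exists[OF that] by (rule someI_ex)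
  have Anonneg: "A c \<ge> 0" if "c \<le> 0" for c using that eta_pos by (simp add: A_def mult_nonneg_nonpos)
  define F where "F c = Wf (A c) (\<theta>s c) - A c * (\<theta>s c - q)" for c
  have ths01: "\<theta>s c \<in> {0..1}" if "c \<in> {cmax..0}" for c using ths_range that by auto
  have Fcont: "continuous_on {cmax..0} F"
  proof -
    have Gc: "continuous_on {cmax..0} (\<lambda>c. Wf (A c) (\<theta>s c))"
      unfolding continuous_on_def
    proof
      fix c0 assume c0: "c0 \<in> {cmax..0}"
      have t2: "((\<lambda>c. Wf (A c0) (\<theta>s c)) \<longlongrightarrow> Wf (A c0) (\<theta>s c0)) (at c0 within {cmax..0})"
      proof -
        have "continuous_on {cmax..0} (\<lambda>c. Wf (A c0) (\<theta>s c))"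
          by (rule continuous_on_compose2[OF P.Wspec_D(1)[OF Wf[OF Anonneg]] ths_cont])
             (use c0 ths01 in auto)
        then show ?thesis using c0 by (simp add: continuous_on_def)
      qed
      have t1: "((\<lambda>c. Wf (A c) (\<theta>s c) - Wf (A c0) (\<theta>s c)) \<longlongrightarrow> 0) (at c0 within {cmax..0})"
      proof (rule Lim_null_comparison)
        show "eventually (\<lambda>c. norm (Wf (A c) (\<theta>s c) - Wf (A c0) (\<theta>s c)) \<le> \<eta> * \<bar>c - c0\<bar>)
                (at c0 within {cmax..0})"
        proof -
          have bound: "norm (Wf (A c) (\<theta>s c) - Wf (A c0) (\<theta>s c)) \<le> \<eta> * \<bar>c - c0\<bar>"
            if c: "c \<in> {cmax..0}" for c
          proof -
            have "\<bar>Wf (A c) (\<theta>s c) - Wf (A c0) (\<theta>s c)\<bar> \<le> \<bar>A c0 - A c\<bar>"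
              using c c0 by (intro P.W_absdiff Wf Anonneg ths01) auto
            also have "\<dots> = \<bar>\<eta> * (c - c0)\<bar>" by (simp add: A_def algebra_simps)
            also have "\<dots> = \<eta> * \<bar>c - c0\<bar>" using eta_pos by (simp add: abs_mult)
            finally show ?thesis by simp
          qed
          show ?thesis unfolding eventually_at_filter by (rule always_eventually) (use bound in auto)
        qed
        have "((\<lambda>c. \<eta> * \<bar>c - c0\<bar>) \<longlongrightarrow> \<eta> * \<bar>c0 - c0\<bar>) (at c0 within {cmax..0})"
          by (intro tendsto_intros)
        then show "((\<lambda>c. \<eta> * \<bar>c - c0\<bar>) \<longlongrightarrow> 0) (at c0 within {cmax..0})" by simp
      qed
      have "((\<lambda>c. (Wf (A c) (\<theta>s c) - Wf (A c0) (\<theta>s c)) + Wf (A c0) (\<theta>s c)) \<longlongrightarrow> 0 + Wf (A c0) (\<theta>s c0))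
              (at c0 within {cmax..0})"
        by (rule tendsto_add[OF t1 t2])
      then show "((\<lambda>c. Wf (A c) (\<theta>s c)) \<longlongrightarrow> Wf (A c0) (\<theta>s c0)) (at c0 within {cmax..0})" by simp
    qed
    show ?thesis unfolding F_def A_def
      by (intro continuous_intros Gc[unfolded A_def] ths_cont)
  qed
  have Fcmax: "F cmax < 0"
  proof -
    have "Wf (A cmax) 1 = 0" using P.Wspec_D(2)[OF Wf[OF Anonneg]] cmax_neg by simp
    moreover have "A cmax > 0" using eta_pos cmax_neg by (simp add: A_def mult_pos_neg)
    moreover have "1 - q > 0" using q by simp
    ultimately show ?thesis by (simp add: F_def ths_cmax)
  qed
  have F0: "F 0 > 0"
  proof -
    have "Wf 0 0 > 0" using P.Wspec_D(3)[OF Wf[of 0]] by simp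
    then show ?thesis by (simp add: F_def A_def ths_zero)
  qed
  obtain cs where cs: "cmax \<le> cs" "cs \<le> 0" "F cs = 0"
    using IVT'[of F cmax 0 0] Fcmax F0 Fcont cmax_neg by auto
  have cs_ne: "cs \<noteq> cmax" "cs \<noteq> 0" using cs Fcmax F0 by auto
  have root_unique: "c1 = c2" if c1: "c1 \<in> {cmax..<0}" "F c1 = 0" and c2: "c2 \<in> {cmax..<0}" "F c2 = 0" for c1 c2
  proof -
    have main: False if lt: "d1 < d2" and d1: "d1 \<in> {cmax..<0}" "F d1 = 0" and d2: "d2 \<in> {cmax..<0}" "F d2 = 0" for d1 d2
    proof -
      define t1 where "t1 = \<theta>s d1"
      define t2 where "t2 = \<theta>s d2"
      have t12: "t2 < t1" using ths_decr lt d1 d2 by (auto simp: t1_def t2_def)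
      have t1r: "t1 \<in> {0..1}" "t2 \<in> {0..1}" using ths01[of d1] ths01[of d2] d1 d2 by (auto simp: t1_def t2_def)
      have a12: "A d2 < A d1" using lt eta_pos by (simp add: A_def)
      have a2: "A d2 \<ge> 0" using Anonneg[of d2] d2 by simp
      have W1: "P.Wspec (A d1) (Wf (A d1))" and W2: "P.Wspec (A d2) (Wf (A d2))"
        using Wf Anonneg d1 d2 by auto
      have e1: "Wf (A d1) t1 = A d1 * (t1 - q)" using d1 by (simp add: F_def t1_def)
      have e2: "Wf (A d2) t2 = A d2 * (t2 - q)" using d2 by (simp add: F_def t2_def)
      have "Wf (A d2) t1 - A d2 * t1 < Wf (A d2) t2 - A d2 * t2"
        by (rule P.W_lin_decr[OF W2]) (use t12 t1r in auto)
      then have "Wf (A d2) t1 < A d2 * (t1 - q)" using e2 by (simp add: algebra_simps)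
      also have "\<dots> \<le> A d1 * (t1 - q)" using a12 t1r q by (intro mult_right_mono) auto
      also have "\<dots> = Wf (A d1) t1" using e1 by simp
      finally have "Wf (A d2) t1 < Wf (A d1) t1" .
      moreover have "Wf (A d1) t1 \<le> Wf (A d2) t1"
        by (rule P.W_mono[OF W2 W1 less_imp_le[OF a12] t1r(1)])
      ultimately show False by simp
    qed
    show ?thesis
    proof (rule ccontr)
      assume "c1 \<noteq> c2"
      then have "c1 < c2 \<or> c2 < c1" by auto
      then show False using main c1 c2 by blast
    qed
  qed
  have nec: "c \<noteq> 0 \<and> c \<noteq> cmax \<and> F c = 0" if c: "c \<in> {cmax..0}" and sol: "solves_Pc \<eta> Qg Qp \<Psi> \<theta>s c \<theta>" for c \<theta>
  proof -
    obtain l1 l2 r1 r2 where range: "\<forall>x. 0 \<le> \<theta> x \<and> \<theta> x \<le> 1" and cont: "continuous_on UNIV \<theta>"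
      and C2l: "C2_on_with {..0} \<theta> l1 l2" and C2r: "C2_on_with {0..} \<theta> r1 r2"
      and eql: "\<forall>x<0. l2 x + c * l1 x = 0" and eqr: "\<forall>x>0. r2 x + \<eta> * c * r1 x = - \<Psi> (\<theta> x)"
      and thbot: "(\<theta> \<longlongrightarrow> 0) at_bot" and th0: "\<theta> 0 = \<theta>s c" and thtop: "(\<theta> \<longlongrightarrow> 1) at_top"
      and l1bot: "(l1 \<longlongrightarrow> 0) at_bot" and r1top: "(r1 \<longlongrightarrow> 0) at_top"
      and iface: "r1 0 - \<eta> * l1 0 = S_flux \<eta> Qg Qp c"
      using sol unfolding solves_Pc_def by blast
    have l10: "l1 0 = - c * \<theta> 0" by (rule sol_left[OF C2l eql thbot l1bot])
    have r10: "r1 0 = A c * (\<theta>s c - q)"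
      using iface l10 th0 by (simp add: S_flux_def q_def A_def algebra_simps)
    have ncmax: "c \<noteq> cmax"
    proof
      assume cc: "c = cmax"
      have "r1 0 > 0"
      proof -
        have "A cmax > 0" using eta_pos cmax_neg by (simp add: A_def mult_pos_neg)
        moreover have "1 - q > 0" using q by simp
        ultimately show ?thesis using r10 cc ths_cmax by simp
      qed
      moreover have "(\<theta> has_real_derivative r1 0) (at 0 within {0..})"
        using C2r by (simp add: C2_on_with_def)
      ultimately obtain d where d: "d > 0" and dd: "\<And>h. h > 0 \<Longrightarrow> 0 + h \<in> {0..} \<Longrightarrow> h < d \<Longrightarrow> \<theta> 0 < \<theta> (0 + h)"
        using has_real_derivative_pos_inc_right by blast
      have "\<theta> 0 < \<theta> (d / 2)" using dd[of "d/2"] d by simp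
      then show False using range th0 cc ths_cmax by (metis not_less)
    qed
    have thlt: "\<theta> 0 < 1"
    proof -
      have "\<theta>s c < \<theta>s cmax" using ths_decr ncmax c by auto
      then show ?thesis using th0 ths_cmax by simp
    qed
    have "r1 0 = Wf (A c) (\<theta> 0)"
      by (rule P.necessity[OF eta_pos _ _ range cont C2r eqr thlt thtop r1top])
         (use c Wf[OF Anonneg[of c]] in \<open>auto simp: A_def\<close>)
    then have Fc: "F c = 0" using r10 th0 by (simp add: F_def)
    then have "c \<noteq> 0" using F0 by auto
    then show ?thesis using ncmax Fc by simp
  qed
  have ex: "\<exists>\<theta>. solves_Pc \<eta> Qg Qp \<Psi> \<theta>s cs \<theta>"
  proof -
    have csneg: "cs < 0" using cs cs_ne by simp
    have t0: "0 < \<theta>s cs" "\<theta>s cs < 1"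
      using ths_decr cs cs_ne ths_zero ths_cmax cmax_neg
      by (metis less_le order_refl)+
    have Wcs: "P.Wspec (- \<eta> * cs) (Wf (A cs))" using Wf[OF Anonneg[of cs]] cs by (simp add: A_def)
    have eq: "Wf (A cs) (\<theta>s cs) = (- \<eta> * cs) * (\<theta>s cs - q)" using cs by (simp add: F_def A_def)
    obtain \<theta> where "(\<forall>x. 0 \<le> \<theta> x \<and> \<theta> x \<le> 1) \<and> continuous_on UNIV \<theta> \<and>
     (\<exists>l1 l2 r1 r2. C2_on_with {..0} \<theta> l1 l2 \<and> C2_on_with {0..} \<theta> r1 r2 \<and>
        (\<forall>x<0. l2 x + cs * l1 x = 0) \<and> (\<forall>x>0. r2 x + \<eta> * cs * r1 x = - \<Psi> (\<theta> x)) \<and>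
        (\<theta> \<longlongrightarrow> 0) at_bot \<and> \<theta> 0 = \<theta>s cs \<and> (\<theta> \<longlongrightarrow> 1) at_top \<and> (l1 \<longlongrightarrow> 0) at_bot \<and>
        (r1 \<longlongrightarrow> 0) at_top \<and> r1 0 - \<eta> * l1 0 = \<eta> * q * cs)"
      using P.construct[OF eta_pos csneg Wcs t0 eq] by blast
    then have "solves_Pc \<eta> Qg Qp \<Psi> \<theta>s cs \<theta>"
      unfolding solves_Pc_def S_flux_def q_def by (simp add: algebra_simps)
    then show ?thesis by blast
  qed
  show ?thesis
  proof (rule ex1I[of _ cs])
    show "cs \<in> {cmax..0} \<and> (\<exists>\<theta>. solves_Pc \<eta> Qg Qp \<Psi> \<theta>s cs \<theta>)" using cs ex by auto
    fix c assume c: "c \<in> {cmax..0} \<and> (\<exists>\<theta>. solves_Pc \<eta> Qg Qp \<Psi> \<theta>s c \<theta>)"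
    then obtain \<theta> where "solves_Pc \<eta> Qg Qp \<Psi> \<theta>s c \<theta>" by blast
    then have "c \<noteq> 0 \<and> c \<noteq> cmax \<and> F c = 0" using nec c by blast
    then show "c = cs" using root_unique[of c cs] c cs cs_ne by auto
  qed
qed

end
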